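(* For $n\ge1$ let $\ell_n=\Psi(L_n)$, $z_n=\Psi(Z_n)$, $h_n=\Psi(H_n)$, and set $\ell_0=z_0=h_0=1$. Let $L(x)=\sum_{n\ge0}\ell_nx^n$, $Z(x)=\sum_{n\ge0}z_nx^n$, $H(x)=\sum_{n\ge0}h_nx^n$. Then $$L(x)=\frac{1+x-x^3}{1-4x-x^4-x^5},$$ $$Z(x)=\frac{1+2x+4x^2+4x^3+6x^4+4x^5+x^6}{1-3x-x^2-6x^3-7x^4-7x^5-5x^6-x^7},$$ $$H(x)=\frac{1+4x+8x^2+8x^3+7x^4+4x^5+2x^6}{1-x-7x^2-12x^3-6x^4-7x^5-4x^6-2x^7}.$$
   Context: A matching of a graph is a set of pairwise vertex-disjoint edges; it is maximal if it is not a proper subset of another matching. $\Psi(G)$ is the number of maximal matchings of $G$. A benzenoid system is a connected plane graph without cut-vertices in which every bounded face is a hexagon, any two hexagonal faces being either disjoint or sharing exactly one edge (then they are adjacent). It is catacondensed if no vertex lies in three hexagons, and a benzenoid chain if moreover no hexagon is adjacent to three other hexagons; its length is its number of hexagons. In a chain, the two hexagons adjacent to only one other hexagon are terminal, the rest interior. An interior hexagon has exactly two vertices of degree 2; it is straight if these are non-adjacent and kinky if they are adjacent. $L_n$ (polyacene) is the benzenoid chain of length $n$ all of whose interior hexagons are straight. A polyphenacene is a benzenoid chain all of whose interior hexagons are kinky; $Z_n$ (zig-zag polyphenacene) is the one of length $n$ whose successive kinks turn alternately in opposite directions (the pairs of degree-2 vertices of consecutive interior hexagons lie alternately on opposite sides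 of the chain), and $H_n$ (helicene) is the one of length $n$ whose kinks all turn in the same direction (viewed as an abstract graph). For $n\le 2$ these three chains coincide. *)

theory Defs
  imports "HOL-Computational_Algebra.Computational_Algebra"
begin

text \<open>Graphs are given by their edge sets (edges are 2-element sets of vertices).
  A matching is a set of pairwise vertex-disjoint edges; it is maximal if it is
  not a proper subset of another matching.\<close>

definition matching :: "'a set set \<Rightarrow> 'a set set \<Rightarrow> bool" where
  "matching E M \<longleftrightarrow> M \<subseteq> E \<and> (\<forall>e\<in>M. \<forall>f\<in>M. e \<noteq> f \<longrightarrow> e \<inter> f = {})"

definition maximal_matching :: "'a set set \<Rightarrow> 'a set set \<Rightarrow> bool" where
  "maximal_matching E M \<longleftrightarrow> matching E M \<and> (\<forall>M'. matching E M' \<and> M \<subseteq> M' \<longrightarrow> M' = M)"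

definition Psi :: "'a set set \<Rightarrow> nat" where
  "Psi E = card {M. maximal_matching E M}"

text \<open>Hexagon i (i = 0,1,...) is glued
  onto the edge {a,b} where (a,b) = chain_att c i, and has new vertices
  4i+2, 4i+3, 4i+4, 4i+5 forming the cycle a, 4i+2, 4i+3, 4i+4, 4i+5, b.
  The next hexagon is glued onto the edge {4i+1+c i, 4i+2+c i}, with c i in {1,2,3}:
  c i = 2 is the edge opposite to {a,b} (hexagon i straight if interior),
  c i = 1 / c i = 3 give a kink to one side / the other side (orientation consistent).\<close>

fun chain_att :: "(nat \<Rightarrow> nat) \<Rightarrow> nat \<Rightarrow> nat \<times> nat" where
  "chain_att c 0 = (0, 1)"
| "chain_att c (Suc i) = (4*i + 1 + c i, 4*i + 2 + c i)"

definition hex_edges :: "(nat \<Rightarrow> nat) \<Rightarrow> nat \<Rightarrow> nat set set" where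
  "hex_edges c i = (case chain_att c i of (a, b) \<Rightarrow>
     {{a, 4*i+2}, {4*i+2, 4*i+3}, {4*i+3, 4*i+4}, {4*i+4, 4*i+5}, {4*i+5, b}, {a, b}})"

definition chain_edges :: "(nat \<Rightarrow> nat) \<Rightarrow> nat \<Rightarrow> nat set set" where
  "chain_edges c n = (\<Union>i<n. hex_edges c i)"

definition polyacene :: "nat \<Rightarrow> nat set set" where
  "polyacene n = chain_edges (\<lambda>_. 2) n"

definition zigzag :: "nat \<Rightarrow> nat set set" where
  "zigzag n = chain_edges (\<lambda>i. if even i then 1 else 3) n"

definition helicene :: "nat \<Rightarrow> nat set set" where
  "helicene n = chain_edges (\<lambda>_. 1) n"

definition ell :: "nat \<Rightarrow> nat" where "ell n = (if n = 0 then 1 else Psi (polyacene n))"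
definition zz :: "nat \<Rightarrow> nat" where "zz n = (if n = 0 then 1 else Psi (zigzag n))"
definition hh :: "nat \<Rightarrow> nat" where "hh n = (if n = 0 then 1 else Psi (helicene n))"

end

theory Submission
  imports Defs
begin


definition good :: "'a set set \<Rightarrow> 'a \<Rightarrow> 'a \<Rightarrow> 'a set set \<Rightarrow> bool" where
  "good E a b M \<longleftrightarrow> matching E M \<and> (\<forall>e\<in>E. e \<inter> \<Union>M = {} \<longrightarrow> a \<in> e \<or> b \<in> e)"

definition sig :: "'a set set \<Rightarrow> 'a \<Rightarrow> 'a \<Rightarrow> 'a set set \<Rightarrow> bool \<times> bool \<times> bool \<times> bool" where
  "sig E a b M = (a \<in> \<Union>M, b \<in> \<Union>M, (\<exists>e\<in>E. e \<inter> \<Union>M = {} \<and> a \<in> e \<and> b \<notin> e),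
      (\<exists>e\<in>E. e \<inter> \<Union>M = {} \<and> b \<in> e \<and> a \<notin> e))"

definition cnt :: "'a set set \<Rightarrow> 'a \<Rightarrow> 'a \<Rightarrow> bool \<times> bool \<times> bool \<times> bool \<Rightarrow> nat" where
  "cnt E a b s = card {M. good E a b M \<and> sig E a b M = s}"

fun Qs :: "'a \<Rightarrow> 'a \<Rightarrow> 'a \<Rightarrow> 'a \<Rightarrow> 'a \<Rightarrow> 'a \<Rightarrow> bool \<times> bool \<times> bool \<times> bool \<times> bool \<Rightarrow> 'a set set" where
  "Qs a u1 u2 u3 u4 b (q1,q2,q3,q4,q5) = {e. (q1 \<and> e = {a,u1}) \<or> (q2 \<and> e = {u1,u2}) \<or> (q3 \<and> e = {u2,u3})
      \<or> (q4 \<and> e = {u3,u4}) \<or> (q5 \<and> e = {u4,b})}"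

fun cvl :: "bool \<times> bool \<times> bool \<times> bool \<Rightarrow> bool \<times> bool \<times> bool \<times> bool \<times> bool \<Rightarrow> bool list" where
  "cvl (al,be,da,db) (q1,q2,q3,q4,q5) = [al \<or> q1, q1 \<or> q2, q2 \<or> q3, q3 \<or> q4, q4 \<or> q5, be \<or> q5]"

definition dfc :: "bool \<times> bool \<times> bool \<times> bool \<Rightarrow> bool \<times> bool \<times> bool \<times> bool \<times> bool \<Rightarrow> nat \<Rightarrow> bool" where
  "dfc s q k \<longleftrightarrow> \<not> cvl s q ! (k - 1) \<and> \<not> cvl s q ! k"

fun okq :: "nat \<Rightarrow> bool \<times> bool \<times> bool \<times> bool \<Rightarrow> bool \<times> bool \<times> bool \<times> bool \<times> bool \<Rightarrow> bool" where
  "okq c (al,be,da,db) (q1,q2,q3,q4,q5) \<longleftrightarrow>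
     \<not>(q1\<and>q2) \<and> \<not>(q2\<and>q3) \<and> \<not>(q3\<and>q4) \<and> \<not>(q4\<and>q5) \<and> \<not>(al\<and>q1) \<and> \<not>(be\<and>q5)
     \<and> (da \<longrightarrow> q1) \<and> (db \<longrightarrow> q5) \<and> (\<not>al \<and> \<not>be \<longrightarrow> q1 \<or> q5)
     \<and> (dfc (al,be,da,db) (q1,q2,q3,q4,q5) 1 \<longrightarrow> 1 \<in> {c, c+1, c+2})
     \<and> (dfc (al,be,da,db) (q1,q2,q3,q4,q5) 2 \<longrightarrow> 2 \<in> {c, c+1, c+2})
     \<and> (dfc (al,be,da,db) (q1,q2,q3,q4,q5) 3 \<longrightarrow> 3 \<in> {c, c+1, c+2})
     \<and> (dfc (al,be,da,db) (q1,q2,q3,q4,q5) 4 \<longrightarrow> 4 \<in> {c, c+1, c+2})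
     \<and> (dfc (al,be,da,db) (q1,q2,q3,q4,q5) 5 \<longrightarrow> 5 \<in> {c, c+1, c+2})"

definition trK :: "nat \<Rightarrow> bool \<times> bool \<times> bool \<times> bool \<Rightarrow> bool \<times> bool \<times> bool \<times> bool \<times> bool \<Rightarrow> bool \<times> bool \<times> bool \<times> bool" where
  "trK c s q = (cvl s q ! c, cvl s q ! (c+1), dfc s q c, dfc s q (c+2))"

locale ext =
  fixes E :: "'a set set" and a b u1 u2 u3 u4 :: 'a
  assumes finE: "finite E" and abE: "{a,b} \<in> E"
    and dist: "distinct [a,b,u1,u2,u3,u4]"
    and new1: "u1 \<notin> \<Union>E" and new2: "u2 \<notin> \<Union>E" and new3: "u3 \<notin> \<Union>E" and new4: "u4 \<notin> \<Union>E"
begin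

definition "P = {{a,u1},{u1,u2},{u2,u3},{u3,u4},{u4,b}}"
definition "E' = E \<union> P"
definition "vs = [a,u1,u2,u3,u4,b]"

lemma nE: "e \<in> E \<Longrightarrow> u1 \<notin> e" "e \<in> E \<Longrightarrow> u2 \<notin> e" "e \<in> E \<Longrightarrow> u3 \<notin> e" "e \<in> E \<Longrightarrow> u4 \<notin> e"
  using new1 new2 new3 new4 by auto

lemma PE: "e \<in> P \<Longrightarrow> e \<notin> E"
  unfolding P_def using nE by auto

lemma QP: "Qs a u1 u2 u3 u4 b q \<subseteq> P"
  by (cases q) (auto simp: P_def)

lemma dist': "a \<noteq> b" "a \<noteq> u1" "a \<noteq> u2" "a \<noteq> u3" "a \<noteq> u4" "b \<noteq> u1" "b \<noteq> u2" "b \<noteq> u3" "b \<noteq> u4"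
  "u1 \<noteq> u2" "u1 \<noteq> u3" "u1 \<noteq> u4" "u2 \<noteq> u3" "u2 \<noteq> u4" "u3 \<noteq> u4"
  using dist by auto

lemma UQ: "\<Union>(Qs a u1 u2 u3 u4 b (q1,q2,q3,q4,q5)) = (if q1 then {a,u1} else {}) \<union> (if q2 then {u1,u2} else {})
   \<union> (if q3 then {u2,u3} else {}) \<union> (if q4 then {u3,u4} else {}) \<union> (if q5 then {u4,b} else {})"
  by auto

lemma nUM: "M \<subseteq> E \<Longrightarrow> u1 \<notin> \<Union>M \<and> u2 \<notin> \<Union>M \<and> u3 \<notin> \<Union>M \<and> u4 \<notin> \<Union>M"
  using new1 new2 new3 new4 by blast

lemma cov: assumes "M \<subseteq> E" and q: "q = (q1,q2,q3,q4,q5)"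
  shows "(u1 \<in> \<Union>(M \<union> Qs a u1 u2 u3 u4 b q)) = (q1 \<or> q2)"
    "(u2 \<in> \<Union>(M \<union> Qs a u1 u2 u3 u4 b q)) = (q2 \<or> q3)"
    "(u3 \<in> \<Union>(M \<union> Qs a u1 u2 u3 u4 b q)) = (q3 \<or> q4)"
    "(u4 \<in> \<Union>(M \<union> Qs a u1 u2 u3 u4 b q)) = (q4 \<or> q5)"
    "(a \<in> \<Union>(M \<union> Qs a u1 u2 u3 u4 b q)) = (a \<in> \<Union>M \<or> q1)"
    "(b \<in> \<Union>(M \<union> Qs a u1 u2 u3 u4 b q)) = (b \<in> \<Union>M \<or> q5)"
  using nUM[OF assms(1)] dist' unfolding assms(2) Union_Un_distrib UQ by auto

abbreviation "Q \<equiv> Qs a u1 u2 u3 u4 b"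

lemma disj_iff: "(\<forall>e\<in>M. \<forall>f\<in>M. e \<noteq> f \<longrightarrow> e \<inter> f = {}) \<longleftrightarrow> (\<forall>e\<in>M. \<forall>f\<in>M. \<forall>x. x \<in> e \<longrightarrow> x \<in> f \<longrightarrow> e = f)"
  by blast

lemma match: assumes ME: "M \<subseteq> E" and q: "q = (q1,q2,q3,q4,q5)"
  shows "matching E' (M \<union> Q q) \<longleftrightarrow> matching E M \<and> \<not>(q1\<and>q2) \<and> \<not>(q2\<and>q3) \<and> \<not>(q3\<and>q4) \<and> \<not>(q4\<and>q5)
     \<and> \<not>(a \<in> \<Union>M \<and> q1) \<and> \<not>(b \<in> \<Union>M \<and> q5)"
proof
  assume m: "matching E' (M \<union> Q q)"
  hence D: "\<And>e f x. e \<in> M \<union> Q q \<Longrightarrow> f \<in> M \<union> Q q \<Longrightarrow> x \<in> e \<Longrightarrow> x \<in> f \<Longrightarrow> e = f"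
    unfolding matching_def by blast
  have "matching E M" using m ME unfolding matching_def by blast
  moreover have "\<not>(q1\<and>q2)"
  proof
    assume "q1 \<and> q2"
    hence "{a,u1} \<in> Q q" "{u1,u2} \<in> Q q" using q by auto
    from D[OF _ _ _ _, of "{a,u1}" "{u1,u2}" u1] this show False using dist' by (auto simp: doubleton_eq_iff)
  qed
  moreover have "\<not>(q2\<and>q3)"
  proof
    assume "q2 \<and> q3"
    hence "{u1,u2} \<in> Q q" "{u2,u3} \<in> Q q" using q by auto
    from D[OF _ _ _ _, of "{u1,u2}" "{u2,u3}" u2] this show False using dist' by (auto simp: doubleton_eq_iff)
  qed
  moreover have "\<not>(q3\<and>q4)"
  proof
    assume "q3 \<and> q4"
    hence "{u2,u3} \<in> Q q" "{u3,u4} \<in> Q q" using q by auto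
    from D[OF _ _ _ _, of "{u2,u3}" "{u3,u4}" u3] this show False using dist' by (auto simp: doubleton_eq_iff)
  qed
  moreover have "\<not>(q4\<and>q5)"
  proof
    assume "q4 \<and> q5"
    hence "{u3,u4} \<in> Q q" "{u4,b} \<in> Q q" using q by auto
    from D[OF _ _ _ _, of "{u3,u4}" "{u4,b}" u4] this show False using dist' by (auto simp: doubleton_eq_iff)
  qed
  moreover have "\<not>(a \<in> \<Union>M \<and> q1)"
  proof
    assume "a \<in> \<Union>M \<and> q1"
    then obtain e where e: "e \<in> M" "a \<in> e" and "{a,u1} \<in> Q q" using q by auto
    moreover have "e \<noteq> {a,u1}" using e ME nE by auto
    ultimately show False using D[of e "{a,u1}" a] by auto
  qed
  moreover have "\<not>(b \<in> \<Union>M \<and> q5)"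
  proof
    assume "b \<in> \<Union>M \<and> q5"
    then obtain e where e: "e \<in> M" "b \<in> e" and "{u4,b} \<in> Q q" using q by auto
    moreover have "e \<in> E" using e ME by auto
    hence "e \<noteq> {u4,b}" using nE(4) by auto
    ultimately show False using D[of e "{u4,b}" b] by auto
  qed
  ultimately show "matching E M \<and> \<not>(q1\<and>q2) \<and> \<not>(q2\<and>q3) \<and> \<not>(q3\<and>q4) \<and> \<not>(q4\<and>q5)
     \<and> \<not>(a \<in> \<Union>M \<and> q1) \<and> \<not>(b \<in> \<Union>M \<and> q5)" by blast
next
  assume H: "matching E M \<and> \<not>(q1\<and>q2) \<and> \<not>(q2\<and>q3) \<and> \<not>(q3\<and>q4) \<and> \<not>(q4\<and>q5)
     \<and> \<not>(a \<in> \<Union>M \<and> q1) \<and> \<not>(b \<in> \<Union>M \<and> q5)"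
  have sub: "M \<union> Q q \<subseteq> E'" using ME QP unfolding E'_def by blast
  have DM: "\<And>e f x. e \<in> M \<Longrightarrow> f \<in> M \<Longrightarrow> x \<in> e \<Longrightarrow> x \<in> f \<Longrightarrow> e = f"
    using H unfolding matching_def by blast
  have DQ: "\<And>e f x. e \<in> Q q \<Longrightarrow> f \<in> Q q \<Longrightarrow> x \<in> e \<Longrightarrow> x \<in> f \<Longrightarrow> e = f"
    using H dist' unfolding q by auto
  have DX: "\<And>e f x. e \<in> M \<Longrightarrow> f \<in> Q q \<Longrightarrow> x \<in> e \<Longrightarrow> x \<in> f \<Longrightarrow> False"
  proof -
    fix e f x assume e: "e \<in> M" and f: "f \<in> Q q" and x: "x \<in> e" "x \<in> f"
    have "e \<in> E" using e ME by auto
    hence "u1 \<notin> e" "u2 \<notin> e" "u3 \<notin> e" "u4 \<notin> e" using nE by auto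
    thus False using H f x e unfolding q by auto
  qed
  show "matching E' (M \<union> Q q)" unfolding matching_def disj_iff
  proof (intro conjI ballI allI impI)
    show "M \<union> Q q \<subseteq> E'" by (rule sub)
    fix e f x assume e: "e \<in> M \<union> Q q" and f: "f \<in> M \<union> Q q" and x: "x \<in> e" "x \<in> f"
    show "e = f"
    proof (cases "e \<in> M")
      case True
      show ?thesis
      proof (cases "f \<in> M")
        case True
        show ?thesis by (rule DM[OF \<open>e \<in> M\<close> True x])
      next
        case False
        hence "f \<in> Q q" using f by simp
        from DX[OF \<open>e \<in> M\<close> this x] show ?thesis ..
      qed
    next
      case False
      hence eQ: "e \<in> Q q" using e by simp
      show ?thesis
      proof (cases "f \<in> M")
        case True
        from DX[OF True eQ x(2) x(1)] show ?thesis ..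
      next
        case False
        hence fQ: "f \<in> Q q" using f by simp
        show ?thesis by (rule DQ[OF eQ fQ x])
      qed
    qed
  qed
qed


end


context ext begin
lemma Edef: assumes ME: "M \<subseteq> E" and q: "q = (q1,q2,q3,q4,q5)" and e: "e \<in> E"
  shows "(e \<inter> \<Union>(M \<union> Q q) = {}) \<longleftrightarrow> (e \<inter> \<Union>M = {} \<and> \<not>(q1 \<and> a \<in> e) \<and> \<not>(q5 \<and> b \<in> e))"
proof -
  have "u1 \<notin> e" "u2 \<notin> e" "u3 \<notin> e" "u4 \<notin> e" using nE e by auto
  thus ?thesis unfolding q Union_Un_distrib UQ by auto
qed

lemma Econd: assumes s: "sig E a b M = (al,be,da,db)"
  shows "(\<forall>e\<in>E. e \<inter> \<Union>M = {} \<longrightarrow> (q1 \<and> a \<in> e) \<or> (q5 \<and> b \<in> e)) \<longleftrightarrow>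
     (\<forall>e\<in>E. e \<inter> \<Union>M = {} \<longrightarrow> a \<in> e \<or> b \<in> e) \<and> (da \<longrightarrow> q1) \<and> (db \<longrightarrow> q5) \<and> (\<not>al \<and> \<not>be \<longrightarrow> q1 \<or> q5)"
proof -
  have al: "al = (a \<in> \<Union>M)" and be: "be = (b \<in> \<Union>M)"
    and da: "da = (\<exists>e\<in>E. e \<inter> \<Union>M = {} \<and> a \<in> e \<and> b \<notin> e)"
    and db: "db = (\<exists>e\<in>E. e \<inter> \<Union>M = {} \<and> b \<in> e \<and> a \<notin> e)"
    using s unfolding sig_def by auto
  have ab: "{a,b} \<inter> \<Union>M = {} \<longleftrightarrow> \<not>al \<and> \<not>be" using al be by auto
  show ?thesis
  proof
    assume H: "\<forall>e\<in>E. e \<inter> \<Union>M = {} \<longrightarrow> (q1 \<and> a \<in> e) \<or> (q5 \<and> b \<in> e)"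
    have 1: "\<forall>e\<in>E. e \<inter> \<Union>M = {} \<longrightarrow> a \<in> e \<or> b \<in> e" using H by blast
    have 2: "da \<longrightarrow> q1" using H unfolding da by blast
    have 3: "db \<longrightarrow> q5" using H unfolding db by blast
    have 4: "\<not>al \<and> \<not>be \<longrightarrow> q1 \<or> q5" using H abE ab by blast
    show "(\<forall>e\<in>E. e \<inter> \<Union>M = {} \<longrightarrow> a \<in> e \<or> b \<in> e) \<and> (da \<longrightarrow> q1) \<and> (db \<longrightarrow> q5) \<and> (\<not>al \<and> \<not>be \<longrightarrow> q1 \<or> q5)"
      using 1 2 3 4 by blast
  next
    assume H: "(\<forall>e\<in>E. e \<inter> \<Union>M = {} \<longrightarrow> a \<in> e \<or> b \<in> e) \<and> (da \<longrightarrow> q1) \<and> (db \<longrightarrow> q5) \<and> (\<not>al \<and> \<not>be \<longrightarrow> q1 \<or> q5)"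
    show "\<forall>e\<in>E. e \<inter> \<Union>M = {} \<longrightarrow> (q1 \<and> a \<in> e) \<or> (q5 \<and> b \<in> e)"
    proof (intro ballI impI)
      fix e assume e: "e \<in> E" and d: "e \<inter> \<Union>M = {}"
      have "a \<in> e \<or> b \<in> e" using H e d by blast
      moreover have "a \<in> e \<Longrightarrow> b \<notin> e \<Longrightarrow> q1" using H e d unfolding da by blast
      moreover have "b \<in> e \<Longrightarrow> a \<notin> e \<Longrightarrow> q5" using H e d unfolding db by blast
      moreover have "a \<in> e \<Longrightarrow> b \<in> e \<Longrightarrow> q1 \<or> q5" using H e d al be by blast
      ultimately show "(q1 \<and> a \<in> e) \<or> (q5 \<and> b \<in> e)" by blast
    qed
  qed
qed

lemma ballE': "(\<forall>e\<in>E'. R e) \<longleftrightarrow> (\<forall>e\<in>E. R e) \<and> R {a,u1} \<and> R {u1,u2} \<and> R {u2,u3} \<and> R {u3,u4} \<and> R {u4,b}"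
  unfolding E'_def P_def by auto

lemma bexE': "(\<exists>e\<in>E'. R e) \<longleftrightarrow> (\<exists>e\<in>E. R e) \<or> R {a,u1} \<or> R {u1,u2} \<or> R {u2,u3} \<or> R {u3,u4} \<or> R {u4,b}"
  unfolding E'_def P_def by auto

lemma dbl: "({x,y} \<inter> U = {}) \<longleftrightarrow> x \<notin> U \<and> y \<notin> U" by auto

lemma goodE': assumes ME: "M \<subseteq> E" and q: "q = (q1,q2,q3,q4,q5)" and s: "sig E a b M = (al,be,da,db)"
  and a': "a' \<notin> \<Union>E" and b': "b' \<notin> \<Union>E"
  shows "good E' a' b' (M \<union> Q q) \<longleftrightarrow> good E a b M \<and> \<not>(q1\<and>q2) \<and> \<not>(q2\<and>q3) \<and> \<not>(q3\<and>q4) \<and> \<not>(q4\<and>q5)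
     \<and> \<not>(al \<and> q1) \<and> \<not>(be \<and> q5) \<and> (da \<longrightarrow> q1) \<and> (db \<longrightarrow> q5) \<and> (\<not>al \<and> \<not>be \<longrightarrow> q1 \<or> q5)
     \<and> (\<not>(al \<or> q1) \<and> \<not>(q1 \<or> q2) \<longrightarrow> a' \<in> {a,u1} \<or> b' \<in> {a,u1})
     \<and> (\<not>(q1 \<or> q2) \<and> \<not>(q2 \<or> q3) \<longrightarrow> a' \<in> {u1,u2} \<or> b' \<in> {u1,u2})
     \<and> (\<not>(q2 \<or> q3) \<and> \<not>(q3 \<or> q4) \<longrightarrow> a' \<in> {u2,u3} \<or> b' \<in> {u2,u3})
     \<and> (\<not>(q3 \<or> q4) \<and> \<not>(q4 \<or> q5) \<longrightarrow> a' \<in> {u3,u4} \<or> b' \<in> {u3,u4})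
     \<and> (\<not>(q4 \<or> q5) \<and> \<not>(be \<or> q5) \<longrightarrow> a' \<in> {u4,b} \<or> b' \<in> {u4,b})" (is "_ \<longleftrightarrow> ?R")
proof -
  have al: "al = (a \<in> \<Union>M)" and be: "be = (b \<in> \<Union>M)" using s unfolding sig_def by auto
  note C = cov[OF ME q]
  have pt: "\<And>e. e \<in> E \<Longrightarrow> (e \<inter> \<Union>(M \<union> Q q) = {} \<longrightarrow> a' \<in> e \<or> b' \<in> e) \<longleftrightarrow>
       (e \<inter> \<Union>M = {} \<longrightarrow> (q1 \<and> a \<in> e) \<or> (q5 \<and> b \<in> e))"
  proof -
    fix e assume e: "e \<in> E"
    hence "a' \<notin> e" "b' \<notin> e" using a' b' by auto
    thus "(e \<inter> \<Union>(M \<union> Q q) = {} \<longrightarrow> a' \<in> e \<or> b' \<in> e) \<longleftrightarrow>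
       (e \<inter> \<Union>M = {} \<longrightarrow> (q1 \<and> a \<in> e) \<or> (q5 \<and> b \<in> e))" using Edef[OF ME q e] by simp
  qed
  have EE: "(\<forall>e\<in>E. e \<inter> \<Union>(M \<union> Q q) = {} \<longrightarrow> a' \<in> e \<or> b' \<in> e) \<longleftrightarrow>
      (\<forall>e\<in>E. e \<inter> \<Union>M = {} \<longrightarrow> (q1 \<and> a \<in> e) \<or> (q5 \<and> b \<in> e))"
    by (rule ball_cong[OF refl pt])
  have "good E' a' b' (M \<union> Q q) \<longleftrightarrow> matching E' (M \<union> Q q) \<and>
      (\<forall>e\<in>E. e \<inter> \<Union>(M \<union> Q q) = {} \<longrightarrow> a' \<in> e \<or> b' \<in> e) \<and>
      (\<not>(al \<or> q1) \<and> \<not>(q1 \<or> q2) \<longrightarrow> a' \<in> {a,u1} \<or> b' \<in> {a,u1})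
     \<and> (\<not>(q1 \<or> q2) \<and> \<not>(q2 \<or> q3) \<longrightarrow> a' \<in> {u1,u2} \<or> b' \<in> {u1,u2})
     \<and> (\<not>(q2 \<or> q3) \<and> \<not>(q3 \<or> q4) \<longrightarrow> a' \<in> {u2,u3} \<or> b' \<in> {u2,u3})
     \<and> (\<not>(q3 \<or> q4) \<and> \<not>(q4 \<or> q5) \<longrightarrow> a' \<in> {u3,u4} \<or> b' \<in> {u3,u4})
     \<and> (\<not>(q4 \<or> q5) \<and> \<not>(be \<or> q5) \<longrightarrow> a' \<in> {u4,b} \<or> b' \<in> {u4,b})"
    unfolding good_def ballE' dbl C al be by blast
  also have "\<dots> \<longleftrightarrow> ?R"
    unfolding EE Econd[OF s] match[OF ME q] good_def al be by argo
  finally show ?thesis .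
qed

lemma sigE': assumes ME: "M \<subseteq> E" and q: "q = (q1,q2,q3,q4,q5)" and s: "sig E a b M = (al,be,da,db)"
  and a': "a' \<notin> \<Union>E" and b': "b' \<notin> \<Union>E"
  shows "sig E' a' b' (M \<union> Q q) = (a' \<in> \<Union>(M \<union> Q q), b' \<in> \<Union>(M \<union> Q q),
     (\<not>(al \<or> q1) \<and> \<not>(q1 \<or> q2) \<and> a' \<in> {a,u1} \<and> b' \<notin> {a,u1}) \<or>
     (\<not>(q1 \<or> q2) \<and> \<not>(q2 \<or> q3) \<and> a' \<in> {u1,u2} \<and> b' \<notin> {u1,u2}) \<or>
     (\<not>(q2 \<or> q3) \<and> \<not>(q3 \<or> q4) \<and> a' \<in> {u2,u3} \<and> b' \<notin> {u2,u3}) \<or>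
     (\<not>(q3 \<or> q4) \<and> \<not>(q4 \<or> q5) \<and> a' \<in> {u3,u4} \<and> b' \<notin> {u3,u4}) \<or>
     (\<not>(q4 \<or> q5) \<and> \<not>(be \<or> q5) \<and> a' \<in> {u4,b} \<and> b' \<notin> {u4,b}),
     (\<not>(al \<or> q1) \<and> \<not>(q1 \<or> q2) \<and> b' \<in> {a,u1} \<and> a' \<notin> {a,u1}) \<or>
     (\<not>(q1 \<or> q2) \<and> \<not>(q2 \<or> q3) \<and> b' \<in> {u1,u2} \<and> a' \<notin> {u1,u2}) \<or>
     (\<not>(q2 \<or> q3) \<and> \<not>(q3 \<or> q4) \<and> b' \<in> {u2,u3} \<and> a' \<notin> {u2,u3}) \<or>
     (\<not>(q3 \<or> q4) \<and> \<not>(q4 \<or> q5) \<and> b' \<in> {u3,u4} \<and> a' \<notin> {u3,u4}) \<or>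
     (\<not>(q4 \<or> q5) \<and> \<not>(be \<or> q5) \<and> b' \<in> {u4,b} \<and> a' \<notin> {u4,b}))"
proof -
  have al: "al = (a \<in> \<Union>M)" and be: "be = (b \<in> \<Union>M)" using s unfolding sig_def by auto
  note C = cov[OF ME q]
  have n1: "\<not>(\<exists>e\<in>E. e \<inter> \<Union>(M \<union> Q q) = {} \<and> a' \<in> e \<and> b' \<notin> e)" using a' by blast
  have n2: "\<not>(\<exists>e\<in>E. e \<inter> \<Union>(M \<union> Q q) = {} \<and> b' \<in> e \<and> a' \<notin> e)" using b' by blast
  show ?thesis
    unfolding sig_def bexE' dbl C al be prod.inject using n1 n2 by argo
qed

lemma vs_simps: "vs!1 = u1" "vs!2 = u2" "vs!3 = u3" "vs!4 = u4"
  unfolding vs_def by simp_all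

lemma char: assumes c: "c \<in> {1,2,3}" and ME: "M \<subseteq> E" and q: "q = (q1,q2,q3,q4,q5)"
  shows "(good E' (vs!c) (vs!(c+1)) (M \<union> Q q) \<and> sig E' (vs!c) (vs!(c+1)) (M \<union> Q q) = s') \<longleftrightarrow>
     (good E a b M \<and> okq c (sig E a b M) q \<and> trK c (sig E a b M) q = s')"
proof -
  obtain al be da db where s: "sig E a b M = (al,be,da,db)" by (cases "sig E a b M") auto
  obtain x1 x2 x3 x4 where s': "s' = (x1,x2,x3,x4)" by (cases s') auto
  note C = cov[OF ME q]
  note D = dist' dist'[symmetric]
  from c have "c = 1 \<or> c = 2 \<or> c = 3" by auto
  then show ?thesis
  proof (elim disjE)
    assume c1: "c = 1"
    have a': "u1 \<notin> \<Union>E" and b': "u2 \<notin> \<Union>E" using new1 new2 .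
    have v: "vs!c = u1" "vs!(c+1) = u2" unfolding c1 vs_def by simp_all
    show ?thesis unfolding v goodE'[OF ME q s a' b'] sigE'[OF ME q s a' b'] C s s' using D
      by (simp add: q trK_def dfc_def c1 del: Qs.simps)
  next
    assume c1: "c = 2"
    have a': "u2 \<notin> \<Union>E" and b': "u3 \<notin> \<Union>E" using new2 new3 .
    have v: "vs!c = u2" "vs!(c+1) = u3" unfolding c1 vs_def by simp_all
    show ?thesis unfolding v goodE'[OF ME q s a' b'] sigE'[OF ME q s a' b'] C s s' using D
      by (simp add: q trK_def dfc_def c1 del: Qs.simps)
  next
    assume c1: "c = 3"
    have a': "u3 \<notin> \<Union>E" and b': "u4 \<notin> \<Union>E" using new3 new4 .
    have v: "vs!c = u3" "vs!(c+1) = u4" unfolding c1 vs_def by simp_all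
    show ?thesis unfolding v goodE'[OF ME q s a' b'] sigE'[OF ME q s a' b'] C s s' using D
      by (simp add: q trK_def dfc_def c1 del: Qs.simps)
  qed
qed

lemma memQ: assumes q: "q = (q1,q2,q3,q4,q5)"
  shows "{a,u1} \<in> Q q \<longleftrightarrow> q1" "{u1,u2} \<in> Q q \<longleftrightarrow> q2" "{u2,u3} \<in> Q q \<longleftrightarrow> q3"
    "{u3,u4} \<in> Q q \<longleftrightarrow> q4" "{u4,b} \<in> Q q \<longleftrightarrow> q5"
  using dist' unfolding q by (auto simp: doubleton_eq_iff)

lemma Qinj: assumes "Q q = Q q'" shows "q = q'"
proof -
  obtain q1 q2 q3 q4 q5 where q: "q = (q1,q2,q3,q4,q5)" by (cases q) auto
  obtain p1 p2 p3 p4 p5 where p: "q' = (p1,p2,p3,p4,p5)" by (cases q') auto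
  have e: "\<And>x. (x \<in> Q q) = (x \<in> Q q')" using assms by simp
  have "q1 = p1" "q2 = p2" "q3 = p3" "q4 = p4" "q5 = p5"
    using e[of "{a,u1}"] e[of "{u1,u2}"] e[of "{u2,u3}"] e[of "{u3,u4}"] e[of "{u4,b}"]
    unfolding memQ[OF q] memQ[OF p] by auto
  thus ?thesis unfolding q p by simp
qed

lemma QE: "Q q \<inter> E = {}" using QP PE by blast

lemma decomp: assumes "M' \<subseteq> E'"
  shows "M' = (M' \<inter> E) \<union> Q ({a,u1} \<in> M', {u1,u2} \<in> M', {u2,u3} \<in> M', {u3,u4} \<in> M', {u4,b} \<in> M')"
proof -
  have "Q ({a,u1} \<in> M', {u1,u2} \<in> M', {u2,u3} \<in> M', {u3,u4} \<in> M', {u4,b} \<in> M') = M' \<inter> P"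
    unfolding P_def Qs.simps by (rule set_eqI) (simp, metis)
  thus ?thesis using assms unfolding E'_def by blast
qed

lemma MQE: "M \<subseteq> E \<Longrightarrow> (M \<union> Q q) - E = Q q" using QE[of q] by blast
lemma MQE2: "M \<subseteq> E \<Longrightarrow> (M \<union> Q q) \<inter> E = M" using QE[of q] by blast
lemma good_sub: "good F x y M \<Longrightarrow> M \<subseteq> F" unfolding good_def matching_def by blast

lemma setEq: assumes c: "c \<in> {1,2,3}"
  shows "{M'. good E' (vs!c) (vs!(c+1)) M' \<and> sig E' (vs!c) (vs!(c+1)) M' = s'}
    = (\<Union>q. (\<lambda>M. M \<union> Q q) ` {M. good E a b M \<and> okq c (sig E a b M) q \<and> trK c (sig E a b M) q = s'})"
proof (intro equalityI subsetI)
  fix M' assume "M' \<in> {M'. good E' (vs!c) (vs!(c+1)) M' \<and> sig E' (vs!c) (vs!(c+1)) M' = s'}"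
  hence H: "good E' (vs!c) (vs!(c+1)) M'" "sig E' (vs!c) (vs!(c+1)) M' = s'" by auto
  define q where "q = ({a,u1} \<in> M', {u1,u2} \<in> M', {u2,u3} \<in> M', {u3,u4} \<in> M', {u4,b} \<in> M')"
  have M': "M' = (M' \<inter> E) \<union> Q q" unfolding q_def by (rule decomp[OF good_sub[OF H(1)]])
  have ME: "M' \<inter> E \<subseteq> E" by blast
  have H': "good E' (vs!c) (vs!(c+1)) ((M' \<inter> E) \<union> Q q) \<and> sig E' (vs!c) (vs!(c+1)) ((M' \<inter> E) \<union> Q q) = s'"
    by (simp only: M'[symmetric] H)
  have "M' \<inter> E \<in> {M. good E a b M \<and> okq c (sig E a b M) q \<and> trK c (sig E a b M) q = s'}"
    using char[OF c ME q_def, of s'] H' by blast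
  from rev_image_eqI[where f="\<lambda>M. M \<union> Q q", OF this M']
  show "M' \<in> (\<Union>q. (\<lambda>M. M \<union> Q q) ` {M. good E a b M \<and> okq c (sig E a b M) q \<and> trK c (sig E a b M) q = s'})"
    by blast
next
  fix M' assume "M' \<in> (\<Union>q. (\<lambda>M. M \<union> Q q) ` {M. good E a b M \<and> okq c (sig E a b M) q \<and> trK c (sig E a b M) q = s'})"
  then obtain q M where M': "M' = M \<union> Q q" and H: "good E a b M" "okq c (sig E a b M) q" "trK c (sig E a b M) q = s'"
    by blast
  obtain q1 q2 q3 q4 q5 where q: "q = (q1,q2,q3,q4,q5)" by (cases q) auto
  have ME: "M \<subseteq> E" using good_sub[OF H(1)] .
  show "M' \<in> {M'. good E' (vs!c) (vs!(c+1)) M' \<and> sig E' (vs!c) (vs!(c+1)) M' = s'}"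
    using char[OF c ME q] H M' by simp
qed

lemma finM: "finite {M. good E a b M \<and> R M}"
proof (rule finite_subset)
  show "{M. good E a b M \<and> R M} \<subseteq> Pow E" by (auto dest: good_sub)
  show "finite (Pow E)" using finE by simp
qed

lemma cnt_step: assumes c: "c \<in> {1,2,3}"
  shows "cnt E' (vs!c) (vs!(c+1)) s' = (\<Sum>q\<in>UNIV. card {M. good E a b M \<and> okq c (sig E a b M) q \<and> trK c (sig E a b M) q = s'})"
proof -
  let ?S = "\<lambda>q. {M. good E a b M \<and> okq c (sig E a b M) q \<and> trK c (sig E a b M) q = s'}"
  have "cnt E' (vs!c) (vs!(c+1)) s' = card (\<Union>q. (\<lambda>M. M \<union> Q q) ` ?S q)"
    unfolding cnt_def setEq[OF c] ..
  also have "\<dots> = (\<Sum>q\<in>UNIV. card ((\<lambda>M. M \<union> Q q) ` ?S q))"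
  proof (rule card_UN_disjoint)
    show "finite (UNIV :: (bool \<times> bool \<times> bool \<times> bool \<times> bool) set)" by simp
    show "\<forall>q\<in>UNIV. finite ((\<lambda>M. M \<union> Q q) ` ?S q)" by (intro ballI finite_imageI finM)
    show "\<forall>q\<in>UNIV. \<forall>q'\<in>UNIV. q \<noteq> q' \<longrightarrow> (\<lambda>M. M \<union> Q q) ` ?S q \<inter> (\<lambda>M. M \<union> Q q') ` ?S q' = {}"
    proof (intro ballI impI)
      fix q q' :: "bool \<times> bool \<times> bool \<times> bool \<times> bool" assume "q \<noteq> q'"
      hence ne: "Q q \<noteq> Q q'" using Qinj by blast
      show "(\<lambda>M. M \<union> Q q) ` ?S q \<inter> (\<lambda>M. M \<union> Q q') ` ?S q' = {}"
      proof (rule ccontr)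
        assume "(\<lambda>M. M \<union> Q q) ` ?S q \<inter> (\<lambda>M. M \<union> Q q') ` ?S q' \<noteq> {}"
        then obtain M M2 where m1: "M \<in> ?S q" and m2: "M2 \<in> ?S q'" and eq: "M \<union> Q q = M2 \<union> Q q'" by blast
        have "M \<subseteq> E" "M2 \<subseteq> E" using good_sub[of E a b M] good_sub[of E a b M2] m1 m2 by auto
        hence "Q q = Q q'" using eq MQE by metis
        thus False using ne by contradiction
      qed
    qed
  qed
  also have "\<dots> = (\<Sum>q\<in>UNIV. card (?S q))"
  proof (rule sum.cong[OF refl], rule card_image)
    fix q
    show "inj_on (\<lambda>M. M \<union> Q q) (?S q)"
    proof (rule inj_onI)
      fix M M2 assume m1: "M \<in> ?S q" and m2: "M2 \<in> ?S q" and eq: "M \<union> Q q = M2 \<union> Q q"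
      have "M \<subseteq> E" "M2 \<subseteq> E" using good_sub[of E a b M] good_sub[of E a b M2] m1 m2 by auto
      thus "M = M2" using eq MQE2 by metis
    qed
  qed
  finally show ?thesis .
qed

lemma card_sig: "card {M. good E a b M \<and> R (sig E a b M)} = (\<Sum>s\<in>UNIV. if R s then cnt E a b s else 0)"
proof -
  have "{M. good E a b M \<and> R (sig E a b M)} = (\<Union>s\<in>{s. R s}. {M. good E a b M \<and> sig E a b M = s})" by auto
  hence "card {M. good E a b M \<and> R (sig E a b M)} = (\<Sum>s\<in>{s. R s}. cnt E a b s)"
    unfolding cnt_def by (simp only:) (rule card_UN_disjoint; auto intro: finM)
  also have "\<dots> = (\<Sum>s\<in>UNIV. if R s then cnt E a b s else 0)"
    using sum.inter_filter[of UNIV "cnt E a b" R] by simp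
  finally show ?thesis .
qed

lemma cnt_step2: assumes c: "c \<in> {1,2,3}"
  shows "cnt E' (vs!c) (vs!(c+1)) s' = (\<Sum>q\<in>UNIV. \<Sum>s\<in>UNIV. if okq c s q \<and> trK c s q = s' then cnt E a b s else 0)"
  unfolding cnt_step[OF c]
proof (rule sum.cong[OF refl])
  fix q
  show "card {M. good E a b M \<and> okq c (sig E a b M) q \<and> trK c (sig E a b M) q = s'} =
    (\<Sum>s\<in>UNIV. if okq c s q \<and> trK c s q = s' then cnt E a b s else 0)"
    using card_sig[of "\<lambda>s. okq c s q \<and> trK c s q = s'"] by simp
qed

end



definition vstep :: "nat \<Rightarrow> (bool \<times> bool \<times> bool \<times> bool \<Rightarrow> nat) \<Rightarrow> bool \<times> bool \<times> bool \<times> bool \<Rightarrow> nat" where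
  "vstep c v s' = (\<Sum>q\<in>UNIV. \<Sum>s\<in>UNIV. (if okq c s q \<and> trK c s q = s' then 1 else 0) * v s)"

lemma sum_UNIV_bool: "(\<Sum>x\<in>(UNIV::bool set). f x) = f False + f True"
  by (simp add: UNIV_bool)

lemma sum_UNIV_prod: "(\<Sum>x\<in>(UNIV::('a::finite \<times> 'b::finite) set). f x) = (\<Sum>x\<in>UNIV. \<Sum>y\<in>UNIV. f (x,y))"
  by (simp add: sum.cartesian_product UNIV_Times_UNIV[symmetric] del: UNIV_Times_UNIV)

lemma step1:
  shows "vstep 1 v (False,False,False,False) = v (True,False,False,False) + v (True,True,False,False)"
      "vstep 1 v (False,False,False,True) = v (True,False,False,False) + v (True,False,False,True)"
      "vstep 1 v (False,False,True,False) = v (False,True,False,False)"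
      "vstep 1 v (False,False,True,True) = v (False,False,False,False) + v (False,False,False,True)"
      "vstep 1 v (False,True,False,False) = v (True,False,False,False) + v (True,False,False,True) + v (True,True,False,False)"
      "vstep 1 v (False,True,False,True) = 0"
      "vstep 1 v (False,True,True,False) = v (False,False,False,False) + v (False,False,False,True) + v (False,True,False,False)"
      "vstep 1 v (False,True,True,True) = 0"
      "vstep 1 v (True,False,False,False) = v (False,False,False,False) + v (False,False,True,False) + v (False,True,False,False) + v (False,True,True,False)"
      "vstep 1 v (True,False,False,True) = v (False,False,False,False) + v (False,False,False,True) + v (False,False,True,False) + v (False,False,True,True)"
      "vstep 1 v (True,False,True,False) = 0"
      "vstep 1 v (True,False,True,True) = 0"
      "vstep 1 v (True,True,False,False) = 2 * v (False,False,False,False) + 2 * v (False,False,False,True) + v (False,False,True,False) + v (False,False,True,True) + 2 * v (False,True,False,False) + v (False,True,True,False) + 2 * v (True,False,False,False) + v (True,False,False,True) + v (True,True,False,False)"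
      "vstep 1 v (True,True,False,True) = 0"
      "vstep 1 v (True,True,True,False) = 0"
      "vstep 1 v (True,True,True,True) = 0"
  unfolding vstep_def sum_UNIV_prod sum_UNIV_bool by (simp_all add: trK_def dfc_def)

lemma step2:
  shows "vstep 2 v (False,False,False,False) = v (False,False,False,False) + v (False,False,False,True) + v (False,False,True,False) + v (False,False,True,True)"
      "vstep 2 v (False,False,False,True) = v (False,True,False,False) + v (False,True,True,False)"
      "vstep 2 v (False,False,True,False) = v (True,False,False,False) + v (True,False,False,True)"
      "vstep 2 v (False,False,True,True) = v (True,True,False,False)"
      "vstep 2 v (False,True,False,False) = v (False,False,False,False) + v (False,False,True,False) + v (False,True,False,False) + v (False,True,True,False)"
      "vstep 2 v (False,True,False,True) = 0"
      "vstep 2 v (False,True,True,False) = v (True,False,False,False) + v (True,True,False,False)"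
      "vstep 2 v (False,True,True,True) = 0"
      "vstep 2 v (True,False,False,False) = v (False,False,False,False) + v (False,False,False,True) + v (True,False,False,False) + v (True,False,False,True)"
      "vstep 2 v (True,False,False,True) = v (False,True,False,False) + v (True,True,False,False)"
      "vstep 2 v (True,False,True,False) = 0"
      "vstep 2 v (True,False,True,True) = 0"
      "vstep 2 v (True,True,False,False) = v (False,False,False,False) + v (False,False,False,True) + v (False,False,True,False) + v (False,False,True,True) + 2 * v (False,True,False,False) + v (False,True,True,False) + 2 * v (True,False,False,False) + v (True,False,False,True) + 2 * v (True,True,False,False)"
      "vstep 2 v (True,True,False,True) = 0"
      "vstep 2 v (True,True,True,False) = 0"
      "vstep 2 v (True,True,True,True) = 0"
  unfolding vstep_def sum_UNIV_prod sum_UNIV_bool by (simp_all add: trK_def dfc_def)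

lemma step3:
  shows "vstep 3 v (False,False,False,False) = v (False,True,False,False) + v (True,True,False,False)"
      "vstep 3 v (False,False,False,True) = v (True,False,False,False)"
      "vstep 3 v (False,False,True,False) = v (False,True,False,False) + v (False,True,True,False)"
      "vstep 3 v (False,False,True,True) = v (False,False,False,False) + v (False,False,True,False)"
      "vstep 3 v (False,True,False,False) = v (False,False,False,False) + v (False,False,False,True) + v (True,False,False,False) + v (True,False,False,True)"
      "vstep 3 v (False,True,False,True) = 0"
      "vstep 3 v (False,True,True,False) = v (False,False,False,False) + v (False,False,False,True) + v (False,False,True,False) + v (False,False,True,True)"
      "vstep 3 v (False,True,True,True) = 0"
      "vstep 3 v (True,False,False,False) = v (False,True,False,False) + v (False,True,True,False) + v (True,True,False,False)"
      "vstep 3 v (True,False,False,True) = v (False,False,False,False) + v (False,False,True,False) + v (True,False,False,False)"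
      "vstep 3 v (True,False,True,False) = 0"
      "vstep 3 v (True,False,True,True) = 0"
      "vstep 3 v (True,True,False,False) = 2 * v (False,False,False,False) + v (False,False,False,True) + 2 * v (False,False,True,False) + v (False,False,True,True) + 2 * v (False,True,False,False) + v (False,True,True,False) + 2 * v (True,False,False,False) + v (True,False,False,True) + v (True,True,False,False)"
      "vstep 3 v (True,True,False,True) = 0"
      "vstep 3 v (True,True,True,False) = 0"
      "vstep 3 v (True,True,True,True) = 0"
  unfolding vstep_def sum_UNIV_prod sum_UNIV_bool by (simp_all add: trK_def dfc_def)




definition v0 :: "bool \<times> bool \<times> bool \<times> bool \<Rightarrow> nat" where
  "v0 s = (if s = (False,False,False,False) \<or> s = (True,True,False,False) then 1 else 0)"

fun swp :: "bool \<times> bool \<times> bool \<times> bool \<Rightarrow> bool \<times> bool \<times> bool \<times> bool" where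
  "swp (al,be,da,db) = (be,al,db,da)"

primrec vec :: "(nat \<Rightarrow> nat) \<Rightarrow> nat \<Rightarrow> bool \<times> bool \<times> bool \<times> bool \<Rightarrow> nat" where
  "vec cf 0 = v0"
| "vec cf (Suc n) = vstep (cf n) (vec cf n)"

primrec VZ :: "nat \<Rightarrow> bool \<times> bool \<times> bool \<times> bool \<Rightarrow> nat" where
  "VZ 0 = v0"
| "VZ (Suc n) = (\<lambda>s. vstep 1 (VZ n) (swp s))"

lemmas step1' = step1[unfolded One_nat_def]

definition cL :: "nat \<Rightarrow> nat" where "cL n = 2"
definition cH :: "nat \<Rightarrow> nat" where "cH n = 1"
abbreviation "VL \<equiv> vec cL"
abbreviation "VH \<equiv> vec cH"

lemma VL_1: "VL (Suc 0) = vstep 2 (VL 0)" by (simp add: numeral_eq_Suc cL_def cH_def)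

lemma tabL1:
  shows "VL (Suc 0) (False,False,False,False) = 1"
      "VL (Suc 0) (False,False,False,True) = 0"
      "VL (Suc 0) (False,False,True,False) = 0"
      "VL (Suc 0) (False,False,True,True) = 1"
      "VL (Suc 0) (False,True,False,False) = 1"
      "VL (Suc 0) (False,True,False,True) = 0"
      "VL (Suc 0) (False,True,True,False) = 1"
      "VL (Suc 0) (False,True,True,True) = 0"
      "VL (Suc 0) (True,False,False,False) = 1"
      "VL (Suc 0) (True,False,False,True) = 1"
      "VL (Suc 0) (True,False,True,False) = 0"
      "VL (Suc 0) (True,False,True,True) = 0"
      "VL (Suc 0) (True,True,False,False) = 3"
      "VL (Suc 0) (True,True,False,True) = 0"
      "VL (Suc 0) (True,True,True,False) = 0"
      "VL (Suc 0) (True,True,True,True) = 0"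
  by (simp_all add: VL_1 v0_def step2 del: vec.simps(2))

lemma VL_2: "VL 2 = vstep 2 (VL (Suc 0))" by (simp add: numeral_eq_Suc cL_def cH_def)

lemma tabL2:
  shows "VL 2 (False,False,False,False) = 2"
      "VL 2 (False,False,False,True) = 2"
      "VL 2 (False,False,True,False) = 2"
      "VL 2 (False,False,True,True) = 3"
      "VL 2 (False,True,False,False) = 3"
      "VL 2 (False,True,False,True) = 0"
      "VL 2 (False,True,True,False) = 4"
      "VL 2 (False,True,True,True) = 0"
      "VL 2 (True,False,False,False) = 3"
      "VL 2 (True,False,False,True) = 4"
      "VL 2 (True,False,True,False) = 0"
      "VL 2 (True,False,True,True) = 0"
      "VL 2 (True,True,False,False) = 14"
      "VL 2 (True,True,False,True) = 0"
      "VL 2 (True,True,True,False) = 0"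
      "VL 2 (True,True,True,True) = 0"
  by (simp_all add: VL_2 tabL1 step2 del: vec.simps(2))

lemma VL_3: "VL 3 = vstep 2 (VL 2)" by (simp add: numeral_eq_Suc cL_def cH_def)

lemma tabL3:
  shows "VL 3 (False,False,False,False) = 9"
      "VL 3 (False,False,False,True) = 7"
      "VL 3 (False,False,True,False) = 7"
      "VL 3 (False,False,True,True) = 14"
      "VL 3 (False,True,False,False) = 11"
      "VL 3 (False,True,False,True) = 0"
      "VL 3 (False,True,True,False) = 17"
      "VL 3 (False,True,True,True) = 0"
      "VL 3 (True,False,False,False) = 11"
      "VL 3 (True,False,False,True) = 17"
      "VL 3 (True,False,True,False) = 0"
      "VL 3 (True,False,True,True) = 0"
      "VL 3 (True,True,False,False) = 57"
      "VL 3 (True,True,False,True) = 0"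
      "VL 3 (True,True,True,False) = 0"
      "VL 3 (True,True,True,True) = 0"
  by (simp_all add: VL_3 tabL2 step2 del: vec.simps(2))

lemma VL_4: "VL 4 = vstep 2 (VL 3)" by (simp add: numeral_eq_Suc cL_def cH_def)

lemma tabL4:
  shows "VL 4 (False,False,False,False) = 37"
      "VL 4 (False,False,False,True) = 28"
      "VL 4 (False,False,True,False) = 28"
      "VL 4 (False,False,True,True) = 57"
      "VL 4 (False,True,False,False) = 44"
      "VL 4 (False,True,False,True) = 0"
      "VL 4 (False,True,True,False) = 68"
      "VL 4 (False,True,True,True) = 0"
      "VL 4 (True,False,False,False) = 44"
      "VL 4 (True,False,False,True) = 68"
      "VL 4 (True,False,True,False) = 0"
      "VL 4 (True,False,True,True) = 0"
      "VL 4 (True,True,False,False) = 229"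
      "VL 4 (True,True,False,True) = 0"
      "VL 4 (True,True,True,False) = 0"
      "VL 4 (True,True,True,True) = 0"
  by (simp_all add: VL_4 tabL3 step2 del: vec.simps(2))

lemma VL_5: "VL 5 = vstep 2 (VL 4)" by (simp add: numeral_eq_Suc cL_def cH_def)

lemma tabL5:
  shows "VL 5 (False,False,False,False) = 150"
      "VL 5 (False,False,False,True) = 112"
      "VL 5 (False,False,True,False) = 112"
      "VL 5 (False,False,True,True) = 229"
      "VL 5 (False,True,False,False) = 177"
      "VL 5 (False,True,False,True) = 0"
      "VL 5 (False,True,True,False) = 273"
      "VL 5 (False,True,True,True) = 0"
      "VL 5 (True,False,False,False) = 177"
      "VL 5 (True,False,False,True) = 273"
      "VL 5 (True,False,True,False) = 0"
      "VL 5 (True,False,True,True) = 0"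
      "VL 5 (True,True,False,False) = 920"
      "VL 5 (True,True,False,True) = 0"
      "VL 5 (True,True,True,False) = 0"
      "VL 5 (True,True,True,True) = 0"
  by (simp_all add: VL_5 tabL4 step2 del: vec.simps(2))

lemma VH_1: "VH (Suc 0) = vstep 1 (VH 0)" by (simp add: numeral_eq_Suc cL_def cH_def)

lemma tabH1:
  shows "VH (Suc 0) (False,False,False,False) = 1"
      "VH (Suc 0) (False,False,False,True) = 0"
      "VH (Suc 0) (False,False,True,False) = 0"
      "VH (Suc 0) (False,False,True,True) = 1"
      "VH (Suc 0) (False,True,False,False) = 1"
      "VH (Suc 0) (False,True,False,True) = 0"
      "VH (Suc 0) (False,True,True,False) = 1"
      "VH (Suc 0) (False,True,True,True) = 0"
      "VH (Suc 0) (True,False,False,False) = 1"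
      "VH (Suc 0) (True,False,False,True) = 1"
      "VH (Suc 0) (True,False,True,False) = 0"
      "VH (Suc 0) (True,False,True,True) = 0"
      "VH (Suc 0) (True,True,False,False) = 3"
      "VH (Suc 0) (True,True,False,True) = 0"
      "VH (Suc 0) (True,True,True,False) = 0"
      "VH (Suc 0) (True,True,True,True) = 0"
  by (simp_all add: VH_1 v0_def step1' del: vec.simps(2))

lemma VH_2: "VH 2 = vstep 1 (VH (Suc 0))" by (simp add: numeral_eq_Suc cL_def cH_def)

lemma tabH2:
  shows "VH 2 (False,False,False,False) = 4"
      "VH 2 (False,False,False,True) = 2"
      "VH 2 (False,False,True,False) = 1"
      "VH 2 (False,False,True,True) = 1"
      "VH 2 (False,True,False,False) = 5"
      "VH 2 (False,True,False,True) = 0"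
      "VH 2 (False,True,True,False) = 2"
      "VH 2 (False,True,True,True) = 0"
      "VH 2 (True,False,False,False) = 3"
      "VH 2 (True,False,False,True) = 2"
      "VH 2 (True,False,True,False) = 0"
      "VH 2 (True,False,True,True) = 0"
      "VH 2 (True,True,False,False) = 12"
      "VH 2 (True,True,False,True) = 0"
      "VH 2 (True,True,True,False) = 0"
      "VH 2 (True,True,True,True) = 0"
  by (simp_all add: VH_2 tabH1 step1' del: vec.simps(2))

lemma VH_3: "VH 3 = vstep 1 (VH 2)" by (simp add: numeral_eq_Suc cL_def cH_def)

lemma tabH3:
  shows "VH 3 (False,False,False,False) = 15"
      "VH 3 (False,False,False,True) = 5"
      "VH 3 (False,False,True,False) = 5"
      "VH 3 (False,False,True,True) = 6"
      "VH 3 (False,True,False,False) = 17"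
      "VH 3 (False,True,False,True) = 0"
      "VH 3 (False,True,True,False) = 11"
      "VH 3 (False,True,True,True) = 0"
      "VH 3 (True,False,False,False) = 12"
      "VH 3 (True,False,False,True) = 8"
      "VH 3 (True,False,True,False) = 0"
      "VH 3 (True,False,True,True) = 0"
      "VH 3 (True,True,False,False) = 46"
      "VH 3 (True,True,False,True) = 0"
      "VH 3 (True,True,True,False) = 0"
      "VH 3 (True,True,True,True) = 0"
  by (simp_all add: VH_3 tabH2 step1' del: vec.simps(2))

lemma VH_4: "VH 4 = vstep 1 (VH 3)" by (simp add: numeral_eq_Suc cL_def cH_def)

lemma tabH4:
  shows "VH 4 (False,False,False,False) = 58"
      "VH 4 (False,False,False,True) = 20"
      "VH 4 (False,False,True,False) = 17"
      "VH 4 (False,False,True,True) = 20"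
      "VH 4 (False,True,False,False) = 66"
      "VH 4 (False,True,False,True) = 0"
      "VH 4 (False,True,True,False) = 37"
      "VH 4 (False,True,True,True) = 0"
      "VH 4 (True,False,False,False) = 48"
      "VH 4 (True,False,False,True) = 31"
      "VH 4 (True,False,True,False) = 0"
      "VH 4 (True,False,True,True) = 0"
      "VH 4 (True,True,False,False) = 174"
      "VH 4 (True,True,False,True) = 0"
      "VH 4 (True,True,True,False) = 0"
      "VH 4 (True,True,True,True) = 0"
  by (simp_all add: VH_4 tabH3 step1' del: vec.simps(2))

lemma VH_5: "VH 5 = vstep 1 (VH 4)" by (simp add: numeral_eq_Suc cL_def cH_def)

lemma tabH5:
  shows "VH 5 (False,False,False,False) = 222"
      "VH 5 (False,False,False,True) = 79"
      "VH 5 (False,False,True,False) = 66"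
      "VH 5 (False,False,True,True) = 78"
      "VH 5 (False,True,False,False) = 253"
      "VH 5 (False,True,False,True) = 0"
      "VH 5 (False,True,True,False) = 144"
      "VH 5 (False,True,True,True) = 0"
      "VH 5 (True,False,False,False) = 178"
      "VH 5 (True,False,False,True) = 115"
      "VH 5 (True,False,True,False) = 0"
      "VH 5 (True,False,True,True) = 0"
      "VH 5 (True,True,False,False) = 663"
      "VH 5 (True,True,False,True) = 0"
      "VH 5 (True,True,True,False) = 0"
      "VH 5 (True,True,True,True) = 0"
  by (simp_all add: VH_5 tabH4 step1' del: vec.simps(2))

lemma VH_6: "VH 6 = vstep 1 (VH 5)" by (simp add: numeral_eq_Suc cL_def cH_def)

lemma tabH6:
  shows "VH 6 (False,False,False,False) = 841"
      "VH 6 (False,False,False,True) = 293"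
      "VH 6 (False,False,True,False) = 253"
      "VH 6 (False,False,True,True) = 301"
      "VH 6 (False,True,False,False) = 956"
      "VH 6 (False,True,False,True) = 0"
      "VH 6 (False,True,True,False) = 554"
      "VH 6 (False,True,True,True) = 0"
      "VH 6 (True,False,False,False) = 685"
      "VH 6 (True,False,False,True) = 445"
      "VH 6 (True,False,True,False) = 0"
      "VH 6 (True,False,True,True) = 0"
      "VH 6 (True,True,False,False) = 2530"
      "VH 6 (True,True,False,True) = 0"
      "VH 6 (True,True,True,False) = 0"
      "VH 6 (True,True,True,True) = 0"
  by (simp_all add: VH_6 tabH5 step1' del: vec.simps(2))

lemma VH_7: "VH 7 = vstep 1 (VH 6)" by (simp add: numeral_eq_Suc cL_def cH_def)

lemma tabH7:
  shows "VH 7 (False,False,False,False) = 3215"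
      "VH 7 (False,False,False,True) = 1130"
      "VH 7 (False,False,True,False) = 956"
      "VH 7 (False,False,True,True) = 1134"
      "VH 7 (False,True,False,False) = 3660"
      "VH 7 (False,True,False,True) = 0"
      "VH 7 (False,True,True,False) = 2090"
      "VH 7 (False,True,True,True) = 0"
      "VH 7 (True,False,False,False) = 2604"
      "VH 7 (True,False,False,True) = 1688"
      "VH 7 (True,False,True,False) = 0"
      "VH 7 (True,False,True,True) = 0"
      "VH 7 (True,True,False,False) = 9633"
      "VH 7 (True,True,False,True) = 0"
      "VH 7 (True,True,True,False) = 0"
      "VH 7 (True,True,True,True) = 0"
  by (simp_all add: VH_7 tabH6 step1' del: vec.simps(2))

lemma VZ_1: "VZ (Suc 0) = (\<lambda>s. vstep 1 (VZ 0) (swp s))" by (simp add: numeral_eq_Suc)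

lemma tabZ1:
  shows "VZ (Suc 0) (False,False,False,False) = 1"
      "VZ (Suc 0) (False,False,False,True) = 0"
      "VZ (Suc 0) (False,False,True,False) = 0"
      "VZ (Suc 0) (False,False,True,True) = 1"
      "VZ (Suc 0) (False,True,False,False) = 1"
      "VZ (Suc 0) (False,True,False,True) = 0"
      "VZ (Suc 0) (False,True,True,False) = 1"
      "VZ (Suc 0) (False,True,True,True) = 0"
      "VZ (Suc 0) (True,False,False,False) = 1"
      "VZ (Suc 0) (True,False,False,True) = 1"
      "VZ (Suc 0) (True,False,True,False) = 0"
      "VZ (Suc 0) (True,False,True,True) = 0"
      "VZ (Suc 0) (True,True,False,False) = 3"
      "VZ (Suc 0) (True,True,False,True) = 0"
      "VZ (Suc 0) (True,True,True,False) = 0"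
      "VZ (Suc 0) (True,True,True,True) = 0"
  by (simp_all add: VZ_1 v0_def step1' del: VZ.simps(2))

lemma VZ_2: "VZ 2 = (\<lambda>s. vstep 1 (VZ (Suc 0)) (swp s))" by (simp add: numeral_eq_Suc)

lemma tabZ2:
  shows "VZ 2 (False,False,False,False) = 4"
      "VZ 2 (False,False,False,True) = 1"
      "VZ 2 (False,False,True,False) = 2"
      "VZ 2 (False,False,True,True) = 1"
      "VZ 2 (False,True,False,False) = 3"
      "VZ 2 (False,True,False,True) = 0"
      "VZ 2 (False,True,True,False) = 2"
      "VZ 2 (False,True,True,True) = 0"
      "VZ 2 (True,False,False,False) = 5"
      "VZ 2 (True,False,False,True) = 2"
      "VZ 2 (True,False,True,False) = 0"
      "VZ 2 (True,False,True,True) = 0"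
      "VZ 2 (True,True,False,False) = 12"
      "VZ 2 (True,True,False,True) = 0"
      "VZ 2 (True,True,True,False) = 0"
      "VZ 2 (True,True,True,True) = 0"
  by (simp_all add: VZ_2 tabZ1 step1' del: VZ.simps(2))

lemma VZ_3: "VZ 3 = (\<lambda>s. vstep 1 (VZ 2) (swp s))" by (simp add: numeral_eq_Suc)

lemma tabZ3:
  shows "VZ 3 (False,False,False,False) = 17"
      "VZ 3 (False,False,False,True) = 3"
      "VZ 3 (False,False,True,False) = 7"
      "VZ 3 (False,False,True,True) = 5"
      "VZ 3 (False,True,False,False) = 11"
      "VZ 3 (False,True,False,True) = 0"
      "VZ 3 (False,True,True,False) = 8"
      "VZ 3 (False,True,True,True) = 0"
      "VZ 3 (True,False,False,False) = 19"
      "VZ 3 (True,False,False,True) = 8"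
      "VZ 3 (True,False,True,False) = 0"
      "VZ 3 (True,False,True,True) = 0"
      "VZ 3 (True,True,False,False) = 45"
      "VZ 3 (True,True,False,True) = 0"
      "VZ 3 (True,True,True,False) = 0"
      "VZ 3 (True,True,True,True) = 0"
  by (simp_all add: VZ_3 tabZ2 step1' del: VZ.simps(2))

lemma VZ_4: "VZ 4 = (\<lambda>s. vstep 1 (VZ 3) (swp s))" by (simp add: numeral_eq_Suc)

lemma tabZ4:
  shows "VZ 4 (False,False,False,False) = 64"
      "VZ 4 (False,False,False,True) = 11"
      "VZ 4 (False,False,True,False) = 27"
      "VZ 4 (False,False,True,True) = 20"
      "VZ 4 (False,True,False,False) = 43"
      "VZ 4 (False,True,False,True) = 0"
      "VZ 4 (False,True,True,False) = 32"
      "VZ 4 (False,True,True,True) = 0"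
      "VZ 4 (True,False,False,False) = 72"
      "VZ 4 (True,False,False,True) = 31"
      "VZ 4 (True,False,True,False) = 0"
      "VZ 4 (True,False,True,True) = 0"
      "VZ 4 (True,True,False,False) = 173"
      "VZ 4 (True,True,False,True) = 0"
      "VZ 4 (True,True,True,False) = 0"
      "VZ 4 (True,True,True,True) = 0"
  by (simp_all add: VZ_4 tabZ3 step1' del: VZ.simps(2))

lemma VZ_5: "VZ 5 = (\<lambda>s. vstep 1 (VZ 4) (swp s))" by (simp add: numeral_eq_Suc)

lemma tabZ5:
  shows "VZ 5 (False,False,False,False) = 245"
      "VZ 5 (False,False,False,True) = 43"
      "VZ 5 (False,False,True,False) = 103"
      "VZ 5 (False,False,True,True) = 75"
      "VZ 5 (False,True,False,False) = 166"
      "VZ 5 (False,True,False,True) = 0"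
      "VZ 5 (False,True,True,False) = 122"
      "VZ 5 (False,True,True,True) = 0"
      "VZ 5 (True,False,False,False) = 276"
      "VZ 5 (True,False,False,True) = 118"
      "VZ 5 (True,False,True,False) = 0"
      "VZ 5 (True,False,True,True) = 0"
      "VZ 5 (True,True,False,False) = 663"
      "VZ 5 (True,True,False,True) = 0"
      "VZ 5 (True,True,True,False) = 0"
      "VZ 5 (True,True,True,True) = 0"
  by (simp_all add: VZ_5 tabZ4 step1' del: VZ.simps(2))

lemma VZ_6: "VZ 6 = (\<lambda>s. vstep 1 (VZ 5) (swp s))" by (simp add: numeral_eq_Suc)

lemma tabZ6:
  shows "VZ 6 (False,False,False,False) = 939"
      "VZ 6 (False,False,False,True) = 166"
      "VZ 6 (False,False,True,False) = 394"
      "VZ 6 (False,False,True,True) = 288"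
      "VZ 6 (False,True,False,False) = 636"
      "VZ 6 (False,True,False,True) = 0"
      "VZ 6 (False,True,True,False) = 466"
      "VZ 6 (False,True,True,True) = 0"
      "VZ 6 (True,False,False,False) = 1057"
      "VZ 6 (True,False,False,True) = 454"
      "VZ 6 (True,False,True,False) = 0"
      "VZ 6 (True,False,True,True) = 0"
      "VZ 6 (True,True,False,False) = 2541"
      "VZ 6 (True,True,False,True) = 0"
      "VZ 6 (True,True,True,False) = 0"
      "VZ 6 (True,True,True,True) = 0"
  by (simp_all add: VZ_6 tabZ5 step1' del: VZ.simps(2))

lemma VZ_7: "VZ 7 = (\<lambda>s. vstep 1 (VZ 6) (swp s))" by (simp add: numeral_eq_Suc)

lemma tabZ7:
  shows "VZ 7 (False,False,False,False) = 3598"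
      "VZ 7 (False,False,False,True) = 636"
      "VZ 7 (False,False,True,False) = 1511"
      "VZ 7 (False,False,True,True) = 1105"
      "VZ 7 (False,True,False,False) = 2435"
      "VZ 7 (False,True,False,True) = 0"
      "VZ 7 (False,True,True,False) = 1787"
      "VZ 7 (False,True,True,True) = 0"
      "VZ 7 (True,False,False,False) = 4052"
      "VZ 7 (True,False,False,True) = 1741"
      "VZ 7 (True,False,True,False) = 0"
      "VZ 7 (True,False,True,True) = 0"
      "VZ 7 (True,True,False,False) = 9739"
      "VZ 7 (True,True,False,True) = 0"
      "VZ 7 (True,True,True,False) = 0"
      "VZ 7 (True,True,True,True) = 0"
  by (simp_all add: VZ_7 tabZ6 step1' del: VZ.simps(2))

lemma VZ_8: "VZ 8 = (\<lambda>s. vstep 1 (VZ 7) (swp s))" by (simp add: numeral_eq_Suc)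

lemma tabZ8:
  shows "VZ 8 (False,False,False,False) = 13791"
      "VZ 8 (False,False,False,True) = 2435"
      "VZ 8 (False,False,True,False) = 5793"
      "VZ 8 (False,False,True,True) = 4234"
      "VZ 8 (False,True,False,False) = 9331"
      "VZ 8 (False,True,False,True) = 0"
      "VZ 8 (False,True,True,False) = 6850"
      "VZ 8 (False,True,True,True) = 0"
      "VZ 8 (True,False,False,False) = 15532"
      "VZ 8 (True,False,False,True) = 6669"
      "VZ 8 (True,False,True,False) = 0"
      "VZ 8 (True,False,True,True) = 0"
      "VZ 8 (True,True,False,False) = 37325"
      "VZ 8 (True,True,False,True) = 0"
      "VZ 8 (True,True,True,False) = 0"
      "VZ 8 (True,True,True,True) = 0"
  by (simp_all add: VZ_8 tabZ7 step1' del: VZ.simps(2))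




lemma vstep_add: "vstep c (\<lambda>s. f s + g s) s' = vstep c f s' + vstep c g s'"
  unfolding vstep_def by (simp add: distrib_left sum.distrib)

lemma vstep_mult: "vstep c (\<lambda>s. k * f s) s' = k * vstep c f s'"
  unfolding vstep_def by (simp add: sum_distrib_left mult.left_commute)

lemma all_st: "(\<And>a b c d. P (a,b,c,d)) \<Longrightarrow> P s" by (cases s) auto

lemma bool_cases4: "P True True True True \<Longrightarrow> P True True True False \<Longrightarrow> P True True False True \<Longrightarrow> P True True False False \<Longrightarrow>
  P True False True True \<Longrightarrow> P True False True False \<Longrightarrow> P True False False True \<Longrightarrow> P True False False False \<Longrightarrow>
  P False True True True \<Longrightarrow> P False True True False \<Longrightarrow> P False True False True \<Longrightarrow> P False True False False \<Longrightarrow>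
  P False False True True \<Longrightarrow> P False False True False \<Longrightarrow> P False False False True \<Longrightarrow> P False False False False \<Longrightarrow> P a b c d"
  by (cases a; cases b; cases c; cases d) auto

lemma recL: "VL (n+5) s = 4 * VL (n+4) s + VL (n+1) s + VL n s"
proof (induction n arbitrary: s)
  case 0
  have "VL 5 s = 4 * VL 4 s + VL (Suc 0) s + VL 0 s"
  proof (rule all_st[of _ s])
    fix a b c d
    show "VL 5 (a,b,c,d) = 4 * VL 4 (a,b,c,d) + VL (Suc 0) (a,b,c,d) + VL 0 (a,b,c,d)"
      by (rule bool_cases4[of _ a b c d]) (simp_all add: tabL1 tabL4 tabL5 v0_def del: vec.simps(2))
  qed
  thus ?case by simp
next
  case (Suc n)
  have IH: "VL (n+5) = (\<lambda>s. 4 * VL (n+4) s + VL (n+1) s + VL n s)" using Suc by auto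
  have "VL (Suc n + 5) s = vstep 2 (VL (n+5)) s" by (simp only: add_Suc vec.simps(2) cL_def)
  also have "\<dots> = 4 * vstep 2 (VL (n+4)) s + vstep 2 (VL (n+1)) s + vstep 2 (VL n) s"
    unfolding IH vstep_add vstep_mult ..
  also have "\<dots> = 4 * VL (Suc n + 4) s + VL (Suc n + 1) s + VL (Suc n) s" by (simp only: add_Suc vec.simps(2) cL_def)
  finally show ?case .
qed

lemma recH: "VH (n+7) s = VH (n+6) s + 7 * VH (n+5) s + 12 * VH (n+4) s + 6 * VH (n+3) s + 7 * VH (n+2) s + 4 * VH (n+1) s + 2 * VH n s"
proof (induction n arbitrary: s)
  case 0
  have "VH 7 s = VH 6 s + 7 * VH 5 s + 12 * VH 4 s + 6 * VH 3 s + 7 * VH 2 s + 4 * VH (Suc 0) s + 2 * VH 0 s"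
  proof (rule all_st[of _ s])
    fix a b c d
    show "VH 7 (a,b,c,d) = VH 6 (a,b,c,d) + 7 * VH 5 (a,b,c,d) + 12 * VH 4 (a,b,c,d) + 6 * VH 3 (a,b,c,d) + 7 * VH 2 (a,b,c,d) + 4 * VH (Suc 0) (a,b,c,d) + 2 * VH 0 (a,b,c,d)"
      by (rule bool_cases4[of _ a b c d]) (simp_all add: tabH1 tabH2 tabH3 tabH4 tabH5 tabH6 tabH7 v0_def del: vec.simps(2))
  qed
  thus ?case by (simp add: numeral_eq_Suc del: vec.simps(2))
next
  case (Suc n)
  have IH: "VH (n+7) = (\<lambda>s. VH (n+6) s + 7 * VH (n+5) s + 12 * VH (n+4) s + 6 * VH (n+3) s + 7 * VH (n+2) s + 4 * VH (n+1) s + 2 * VH n s)" using Suc by auto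
  have "VH (Suc n + 7) s = vstep 1 (VH (n+7)) s" by (simp only: add_Suc vec.simps(2) cH_def)
  also have "\<dots> = vstep 1 (VH (n+6)) s + 7 * vstep 1 (VH (n+5)) s + 12 * vstep 1 (VH (n+4)) s + 6 * vstep 1 (VH (n+3)) s + 7 * vstep 1 (VH (n+2)) s + 4 * vstep 1 (VH (n+1)) s + 2 * vstep 1 (VH n) s"
    unfolding IH vstep_add vstep_mult ..
  also have "\<dots> = VH (Suc n + 6) s + 7 * VH (Suc n + 5) s + 12 * VH (Suc n + 4) s + 6 * VH (Suc n + 3) s + 7 * VH (Suc n + 2) s + 4 * VH (Suc n + 1) s + 2 * VH (Suc n) s" by (simp only: add_Suc vec.simps(2) cH_def)
  finally show ?case .
qed

lemma VZ_Suc_app: "VZ (Suc n) s = vstep 1 (VZ n) (swp s)" by simp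

lemma recZ: "VZ (n+8) s = 3 * VZ (n+7) s + VZ (n+6) s + 6 * VZ (n+5) s + 7 * VZ (n+4) s + 7 * VZ (n+3) s + 5 * VZ (n+2) s + VZ (n+1) s"
proof (induction n arbitrary: s)
  case 0
  have "VZ 8 s = 3 * VZ 7 s + VZ 6 s + 6 * VZ 5 s + 7 * VZ 4 s + 7 * VZ 3 s + 5 * VZ 2 s + VZ (Suc 0) s"
  proof (rule all_st[of _ s])
    fix a b c d
    show "VZ 8 (a,b,c,d) = 3 * VZ 7 (a,b,c,d) + VZ 6 (a,b,c,d) + 6 * VZ 5 (a,b,c,d) + 7 * VZ 4 (a,b,c,d) + 7 * VZ 3 (a,b,c,d) + 5 * VZ 2 (a,b,c,d) + VZ (Suc 0) (a,b,c,d)"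
      by (rule bool_cases4[of _ a b c d]) (simp_all add: tabZ1 tabZ2 tabZ3 tabZ4 tabZ5 tabZ6 tabZ7 tabZ8 del: VZ.simps(2))
  qed
  thus ?case by (simp add: numeral_eq_Suc del: VZ.simps(2))
next
  case (Suc n)
  have IH: "VZ (n+8) = (\<lambda>s. 3 * VZ (n+7) s + VZ (n+6) s + 6 * VZ (n+5) s + 7 * VZ (n+4) s + 7 * VZ (n+3) s + 5 * VZ (n+2) s + VZ (n+1) s)" using Suc by auto
  have "VZ (Suc n + 8) s = vstep 1 (VZ (n+8)) (swp s)" by (simp only: add_Suc VZ_Suc_app)
  also have "\<dots> = 3 * vstep 1 (VZ (n+7)) (swp s) + vstep 1 (VZ (n+6)) (swp s) + 6 * vstep 1 (VZ (n+5)) (swp s) + 7 * vstep 1 (VZ (n+4)) (swp s) + 7 * vstep 1 (VZ (n+3)) (swp s) + 5 * vstep 1 (VZ (n+2)) (swp s) + vstep 1 (VZ (n+1)) (swp s)"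
    unfolding IH vstep_add vstep_mult ..
  also have "\<dots> = 3 * VZ (Suc n + 7) s + VZ (Suc n + 6) s + 6 * VZ (Suc n + 5) s + 7 * VZ (Suc n + 4) s + 7 * VZ (Suc n + 3) s + 5 * VZ (Suc n + 2) s + VZ (Suc n + 1) s" by (simp only: add_Suc VZ_Suc_app)
  finally show ?case .
qed




lemma mult_pCons_nth: "(f * fps_of_poly (pCons c p)) $ n = c * f $ n + (if n = 0 then 0 else (f * fps_of_poly p) $ (n - 1))"
  for f :: "'a::comm_ring_1 fps"
proof -
  have "f * fps_of_poly (pCons c p) = fps_const c * f + fps_X * (f * fps_of_poly p)"
    by (simp add: fps_of_poly_pCons algebra_simps)
  thus ?thesis by simp
qed

lemma coeff_pCons_numeral: "coeff (pCons a p) (numeral k) = coeff p (pred_numeral k)"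
  by (simp add: numeral_eq_Suc)

lemma gf_div: assumes "A * fps_of_poly D = fps_of_poly N" and "coeff D 0 \<noteq> 0"
  shows "A = fps_of_poly N / fps_of_poly (D :: rat poly)"
proof -
  have d: "fps_of_poly D $ 0 \<noteq> 0" using assms(2) by simp
  have "fps_of_poly N / fps_of_poly D = A * fps_of_poly D * inverse (fps_of_poly D)"
    using assms(1) fps_divide_unit[OF d] by simp
  also have "\<dots> = A" using inverse_mult_eq_1'[OF d] by (simp add: mult.assoc)
  finally show ?thesis by simp
qed

definition aL :: "nat \<Rightarrow> nat" where
  "aL n = VL n (True,True,False,False) + VL n (True,False,False,False) + VL n (False,True,False,False)"

lemma aL_rec: "aL (m+5) = 4 * aL (m+4) + aL (m+1) + aL m"
  unfolding aL_def recL[of m] by simp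

lemma aL_vals: "aL 0 = 1" "aL (Suc 0) = 5" "aL 2 = 20" "aL 3 = 79" "aL 4 = 317"
  unfolding aL_def by (simp_all add: tabL1 tabL2 tabL3 tabL4 v0_def del: vec.simps(2))

lemma gfL: "Abs_fps (\<lambda>n. of_nat (aL n) :: rat) = fps_of_poly [:1, 1, 0, -1:] / fps_of_poly [:1, -4, 0, 0, -1, -1:]"
proof (rule gf_div)
  show "coeff [:1, -4, 0, 0, -1, -1:] 0 \<noteq> (0::rat)" by simp
  show "Abs_fps (\<lambda>n. of_nat (aL n) :: rat) * fps_of_poly [:1, -4, 0, 0, -1, -1:] = fps_of_poly [:1, 1, 0, -1:]"
  proof (rule fps_ext)
    fix n
    show "(Abs_fps (\<lambda>n. of_nat (aL n) :: rat) * fps_of_poly [:1, -4, 0, 0, -1, -1:]) $ n = fps_of_poly [:1, 1, 0, -1:] $ n"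
    proof (cases "n < 5")
      case True
      hence "n = 0 \<or> n = 1 \<or> n = 2 \<or> n = 3 \<or> n = 4" by auto
      thus ?thesis by (elim disjE) (simp_all add: mult_pCons_nth aL_vals coeff_pCons_numeral)
    next
      case False
      then obtain m where n: "n = m + 5" by (metis add.commute le_add_diff_inverse not_less)
      have r: "(of_nat (aL (m+5)) :: rat) = 4 * of_nat (aL (m+4)) + of_nat (aL (m+1)) + of_nat (aL m)"
        unfolding aL_rec by simp
      have "coeff [:1, 1, 0, -1:] (m+5) = (0::rat)" by (simp add: numeral_eq_Suc)
      thus ?thesis using r unfolding n by (simp add: mult_pCons_nth numeral_eq_Suc)
    qed
  qed
qed

definition aH :: "nat \<Rightarrow> nat" where
  "aH n = VH n (True,True,False,False) + VH n (True,False,False,False) + VH n (False,True,False,False)"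

lemma aH_rec: "aH (m+7) = aH (m+6) + 7 * aH (m+5) + 12 * aH (m+4) + 6 * aH (m+3) + 7 * aH (m+2) + 4 * aH (m+1) + 2 * aH m"
  unfolding aH_def recH[of m] by simp

lemma aH_vals: "aH 0 = 1" "aH (Suc 0) = 5" "aH 2 = 20" "aH 3 = 75" "aH 4 = 288" "aH 5 = 1094" "aH 6 = 4171"
  unfolding aH_def by (simp_all add: tabH1 tabH2 tabH3 tabH4 tabH5 tabH6 v0_def del: vec.simps(2))

lemma gfH: "Abs_fps (\<lambda>n. of_nat (aH n) :: rat) = fps_of_poly [:1, 4, 8, 8, 7, 4, 2:] / fps_of_poly [:1, -1, -7, -12, -6, -7, -4, -2:]"
proof (rule gf_div)
  show "coeff [:1, -1, -7, -12, -6, -7, -4, -2:] 0 \<noteq> (0::rat)" by simp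
  show "Abs_fps (\<lambda>n. of_nat (aH n) :: rat) * fps_of_poly [:1, -1, -7, -12, -6, -7, -4, -2:] = fps_of_poly [:1, 4, 8, 8, 7, 4, 2:]"
  proof (rule fps_ext)
    fix n
    show "(Abs_fps (\<lambda>n. of_nat (aH n) :: rat) * fps_of_poly [:1, -1, -7, -12, -6, -7, -4, -2:]) $ n = fps_of_poly [:1, 4, 8, 8, 7, 4, 2:] $ n"
    proof (cases "n < 7")
      case True
      hence "n = 0 \<or> n = 1 \<or> n = 2 \<or> n = 3 \<or> n = 4 \<or> n = 5 \<or> n = 6" by auto
      thus ?thesis by (elim disjE) (simp_all add: mult_pCons_nth aH_vals coeff_pCons_numeral)
    next
      case False
      then obtain m where n: "n = m + 7" by (metis add.commute le_add_diff_inverse not_less)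
      have r: "(of_nat (aH (m+7)) :: rat) = of_nat (aH (m+6)) + 7 * of_nat (aH (m+5)) + 12 * of_nat (aH (m+4)) + 6 * of_nat (aH (m+3)) + 7 * of_nat (aH (m+2)) + 4 * of_nat (aH (m+1)) + 2 * of_nat (aH m)"
        unfolding aH_rec by simp
      have "coeff [:1, 4, 8, 8, 7, 4, 2:] (m+7) = (0::rat)" by (simp add: numeral_eq_Suc)
      thus ?thesis using r unfolding n by (simp add: mult_pCons_nth numeral_eq_Suc)
    qed
  qed
qed

definition aZ :: "nat \<Rightarrow> nat" where
  "aZ n = VZ n (True,True,False,False) + VZ n (True,False,False,False) + VZ n (False,True,False,False)"

lemma aZ_rec: "aZ (m+8) = 3 * aZ (m+7) + aZ (m+6) + 6 * aZ (m+5) + 7 * aZ (m+4) + 7 * aZ (m+3) + 5 * aZ (m+2) + aZ (m+1)"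
  unfolding aZ_def recZ[of m] by simp

lemma aZ_vals: "aZ 0 = 1" "aZ (Suc 0) = 5" "aZ 2 = 20" "aZ 3 = 75" "aZ 4 = 288" "aZ 5 = 1105" "aZ 6 = 4234" "aZ 7 = 16226"
  unfolding aZ_def by (simp_all add: tabZ1 tabZ2 tabZ3 tabZ4 tabZ5 tabZ6 tabZ7 v0_def del: VZ.simps(2))

lemma gfZ: "Abs_fps (\<lambda>n. of_nat (aZ n) :: rat) = fps_of_poly [:1, 2, 4, 4, 6, 4, 1:] / fps_of_poly [:1, -3, -1, -6, -7, -7, -5, -1:]"
proof (rule gf_div)
  show "coeff [:1, -3, -1, -6, -7, -7, -5, -1:] 0 \<noteq> (0::rat)" by simp
  show "Abs_fps (\<lambda>n. of_nat (aZ n) :: rat) * fps_of_poly [:1, -3, -1, -6, -7, -7, -5, -1:] = fps_of_poly [:1, 2, 4, 4, 6, 4, 1:]"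
  proof (rule fps_ext)
    fix n
    show "(Abs_fps (\<lambda>n. of_nat (aZ n) :: rat) * fps_of_poly [:1, -3, -1, -6, -7, -7, -5, -1:]) $ n = fps_of_poly [:1, 2, 4, 4, 6, 4, 1:] $ n"
    proof (cases "n < 8")
      case True
      hence "n = 0 \<or> n = 1 \<or> n = 2 \<or> n = 3 \<or> n = 4 \<or> n = 5 \<or> n = 6 \<or> n = 7" by auto
      thus ?thesis by (elim disjE) (simp_all add: mult_pCons_nth aZ_vals coeff_pCons_numeral)
    next
      case False
      then obtain m where n: "n = m + 8" by (metis add.commute le_add_diff_inverse not_less)
      have r: "(of_nat (aZ (m+8)) :: rat) = 3 * of_nat (aZ (m+7)) + of_nat (aZ (m+6)) + 6 * of_nat (aZ (m+5)) + 7 * of_nat (aZ (m+4)) + 7 * of_nat (aZ (m+3)) + 5 * of_nat (aZ (m+2)) + of_nat (aZ (m+1))"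
        unfolding aZ_rec by simp
      have "coeff [:1, 2, 4, 4, 6, 4, 1:] (m+8) = (0::rat)" by (simp add: numeral_eq_Suc)
      thus ?thesis using r unfolding n by (simp add: mult_pCons_nth numeral_eq_Suc)
    qed
  qed
qed




definition valid :: "(nat \<Rightarrow> nat) \<Rightarrow> bool" where "valid c \<longleftrightarrow> (\<forall>i. c i \<in> {1,2,3})"

abbreviation "AA c n \<equiv> fst (chain_att c n)"
abbreviation "BB c n \<equiv> snd (chain_att c n)"

definition GG :: "(nat \<Rightarrow> nat) \<Rightarrow> nat \<Rightarrow> nat set set" where
  "GG c n = chain_edges c n \<union> {{AA c n, BB c n}}"

definition PP :: "(nat \<Rightarrow> nat) \<Rightarrow> nat \<Rightarrow> nat set set" where
  "PP c n = {{AA c n, 4*n+2}, {4*n+2, 4*n+3}, {4*n+3, 4*n+4}, {4*n+4, 4*n+5}, {4*n+5, BB c n}}"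

lemma hex_PP: "hex_edges c n = PP c n \<union> {{AA c n, BB c n}}"
  unfolding hex_edges_def PP_def by (cases "chain_att c n") auto

lemma att_bound: assumes "valid c"
  shows "AA c n < 4*n+2 \<and> BB c n < 4*n+2 \<and> AA c n \<noteq> BB c n"
proof (cases n)
  case 0 thus ?thesis by simp
next
  case (Suc i)
  have "c i \<in> {1,2,3}" using assms unfolding valid_def by blast
  hence "c i \<le> 3" by auto
  thus ?thesis using Suc by simp
qed

lemma verts_bound: assumes "valid c" and "e \<in> chain_edges c n" and "x \<in> e"
  shows "x < 4*n+2"
proof -
  obtain i where i: "i < n" and e: "e \<in> hex_edges c i" using assms(2) unfolding chain_edges_def by blast
  have b: "AA c i < 4*i+2" "BB c i < 4*i+2" using att_bound[OF assms(1)] by auto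
  have "x \<le> 4*i+5" using e assms(3) b unfolding hex_PP PP_def by auto
  thus ?thesis using i by linarith
qed

lemma fin_chain: "finite (chain_edges c n)"
  unfolding chain_edges_def by (rule finite_UN_I) (auto simp: hex_PP PP_def)

lemma GG_ext: assumes "valid c"
  shows "ext (GG c n) (AA c n) (BB c n) (4*n+2) (4*n+3) (4*n+4) (4*n+5)"
proof
  show "finite (GG c n)" unfolding GG_def using fin_chain by simp
  show "{AA c n, BB c n} \<in> GG c n" unfolding GG_def by simp
  show "distinct [AA c n, BB c n, 4*n+2, 4*n+3, 4*n+4, 4*n+5]" using att_bound[OF assms, of n] by auto
  have vb: "\<And>x. x \<in> \<Union>(GG c n) \<Longrightarrow> x < 4*n+2"
  proof -
    fix x assume "x \<in> \<Union>(GG c n)"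
    then obtain e where e: "e \<in> GG c n" "x \<in> e" by blast
    show "x < 4*n+2"
    proof (cases "e \<in> chain_edges c n")
      case True show ?thesis by (rule verts_bound[OF assms True e(2)])
    next
      case False
      hence "e = {AA c n, BB c n}" using e(1) unfolding GG_def by blast
      thus ?thesis using e(2) att_bound[OF assms, of n] by auto
    qed
  qed
  show "4*n+2 \<notin> \<Union>(GG c n)" "4*n+3 \<notin> \<Union>(GG c n)" "4*n+4 \<notin> \<Union>(GG c n)" "4*n+5 \<notin> \<Union>(GG c n)"
    using vb by fastforce+
qed

lemma valid_c: "valid c \<Longrightarrow> c n = 1 \<or> c n = 2 \<or> c n = 3"
proof -
  assume "valid c"
  hence "c n \<in> {1,2,3}" unfolding valid_def by blast
  thus ?thesis by simp
qed

lemma chain_Suc: "chain_edges c (Suc n) = chain_edges c n \<union> hex_edges c n"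
  unfolding chain_edges_def by (simp add: lessThan_Suc Un_commute)

lemma att_in_PP: assumes "valid c" shows "{AA c (Suc n), BB c (Suc n)} \<in> PP c n"
proof -
  have c: "c n = 1 \<or> c n = 2 \<or> c n = 3" using valid_c[OF assms] .
  have "{AA c (Suc n), BB c (Suc n)} = {4*n+1+c n, 4*n+2+c n}" by simp
  moreover have "{4*n+1+c n, 4*n+2+c n} \<in> PP c n"
  proof -
    have "{4*n+1+c n, 4*n+2+c n} = {4*n+2, 4*n+3} \<or> {4*n+1+c n, 4*n+2+c n} = {4*n+3, 4*n+4} \<or> {4*n+1+c n, 4*n+2+c n} = {4*n+4, 4*n+5}"
    proof -
      have "c n = 1 \<Longrightarrow> {4*n+1+c n, 4*n+2+c n} = {4*n+2, 4*n+3}"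
        by (intro arg_cong2[where f="\<lambda>x y. {x,y}"]) auto
      moreover have "c n = 2 \<Longrightarrow> {4*n+1+c n, 4*n+2+c n} = {4*n+3, 4*n+4}"
        by (intro arg_cong2[where f="\<lambda>x y. {x,y}"]) auto
      moreover have "c n = 3 \<Longrightarrow> {4*n+1+c n, 4*n+2+c n} = {4*n+4, 4*n+5}"
        by (intro arg_cong2[where f="\<lambda>x y. {x,y}"]) auto
      ultimately show ?thesis using c by blast
    qed
    thus ?thesis unfolding PP_def by blast
  qed
  ultimately show ?thesis by simp
qed

lemma GG_Suc: assumes "valid c"
  shows "GG c (Suc n) = ext.E' (GG c n) (AA c n) (BB c n) (4*n+2) (4*n+3) (4*n+4) (4*n+5)"
proof -
  have P: "ext.P (AA c n) (BB c n) (4*n+2) (4*n+3) (4*n+4) (4*n+5) = PP c n"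
    unfolding ext.P_def[OF GG_ext[OF assms]] PP_def ..
  have "GG c (Suc n) = chain_edges c n \<union> hex_edges c n"
    unfolding GG_def chain_Suc hex_PP using att_in_PP[OF assms, of n] by blast
  also have "\<dots> = GG c n \<union> PP c n" unfolding GG_def hex_PP by blast
  finally show ?thesis unfolding ext.E'_def[OF GG_ext[OF assms]] P .
qed

lemma vs_att: assumes "valid c"
  shows "ext.vs (AA c n) (BB c n) (4*n+2) (4*n+3) (4*n+4) (4*n+5) ! c n = AA c (Suc n)"
    "ext.vs (AA c n) (BB c n) (4*n+2) (4*n+3) (4*n+4) (4*n+5) ! (c n + 1) = BB c (Suc n)"
proof -
  have c: "c n = 1 \<or> c n = 2 \<or> c n = 3" using valid_c[OF assms] .
  show "ext.vs (AA c n) (BB c n) (4*n+2) (4*n+3) (4*n+4) (4*n+5) ! c n = AA c (Suc n)"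
    "ext.vs (AA c n) (BB c n) (4*n+2) (4*n+3) (4*n+4) (4*n+5) ! (c n + 1) = BB c (Suc n)"
    unfolding ext.vs_def[OF GG_ext[OF assms]] using c by (elim disjE; simp)+
qed



lemma GG0: "GG c 0 = {{0,1}}" unfolding GG_def chain_edges_def by simp

lemma good01: "good {{0::nat,1}} 0 1 M \<longleftrightarrow> M = {} \<or> M = {{0,1}}"
proof
  assume "good {{0::nat,1}} 0 1 M"
  hence "M \<subseteq> {{0,1}}" unfolding good_def matching_def by blast
  thus "M = {} \<or> M = {{0,1}}" by blast
next
  assume "M = {} \<or> M = {{0,1}}"
  thus "good {{0::nat,1}} 0 1 M" unfolding good_def matching_def by auto
qed

lemma cnt0: "cnt {{0::nat,1}} 0 1 s = v0 s"
proof -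
  have sig0: "sig {{0::nat,1}} 0 1 {} = (False,False,False,False)" unfolding sig_def by auto
  have sig1: "sig {{0::nat,1}} 0 1 {{0,1}} = (True,True,False,False)" unfolding sig_def by auto
  have "{M. good {{0::nat,1}} 0 1 M \<and> sig {{0,1}} 0 1 M = s} =
     (if s = (False,False,False,False) then {{}} else {}) \<union> (if s = (True,True,False,False) then {{{0,1}}} else {})"
    unfolding good01 using sig0 sig1 by auto
  thus ?thesis unfolding cnt_def v0_def by auto
qed

lemma cnt_GG: assumes v: "valid c"
  shows "cnt (GG c n) (AA c n) (BB c n) = vec c n"
proof (induction n)
  case 0
  show ?case unfolding GG0 by (rule ext) (simp only: chain_att.simps fst_conv snd_conv vec.simps(1) cnt0)
next
  case (Suc n)
  have cn: "c n \<in> {1,2,3}" using v unfolding valid_def by blast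
  show ?case
  proof (rule ext)
    fix s'
    have "cnt (GG c (Suc n)) (AA c (Suc n)) (BB c (Suc n)) s' =
      (\<Sum>q\<in>UNIV. \<Sum>s\<in>UNIV. if okq (c n) s q \<and> trK (c n) s q = s' then cnt (GG c n) (AA c n) (BB c n) s else 0)"
      using ext.cnt_step2[OF GG_ext[OF v, of n] cn, where s'=s'] unfolding GG_Suc[OF v] vs_att[OF v] .
    also have "\<dots> = vstep (c n) (vec c n) s'"
      unfolding Suc vstep_def by (intro sum.cong refl) simp
    finally show "cnt (GG c (Suc n)) (AA c (Suc n)) (BB c (Suc n)) s' = vec c (Suc n) s'" by simp
  qed
qed

fun fin :: "bool \<times> bool \<times> bool \<times> bool \<Rightarrow> bool" where
  "fin (al,be,da,db) \<longleftrightarrow> (al \<or> be) \<and> \<not>da \<and> \<not>db"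

lemma maximal_iff1: assumes ne: "\<forall>e\<in>E. e \<noteq> {}"
  shows "maximal_matching E M \<longleftrightarrow> matching E M \<and> (\<forall>e\<in>E. e \<inter> \<Union>M \<noteq> {})"
proof
  assume mm: "maximal_matching E M"
  hence m: "matching E M" unfolding maximal_matching_def by blast
  have "\<forall>e\<in>E. e \<inter> \<Union>M \<noteq> {}"
  proof (intro ballI notI)
    fix e assume e: "e \<in> E" and d: "e \<inter> \<Union>M = {}"
    have "matching E (insert e M)" using m e d unfolding matching_def by blast
    hence "insert e M = M" using mm unfolding maximal_matching_def by blast
    hence "e \<in> M" by blast
    hence "e \<subseteq> \<Union>M" by blast
    thus False using d ne e by blast
  qed
  thus "matching E M \<and> (\<forall>e\<in>E. e \<inter> \<Union>M \<noteq> {})" using m by blast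
next
  assume H: "matching E M \<and> (\<forall>e\<in>E. e \<inter> \<Union>M \<noteq> {})"
  show "maximal_matching E M" unfolding maximal_matching_def
  proof (intro conjI allI impI)
    show "matching E M" using H by blast
    fix M' assume M': "matching E M' \<and> M \<subseteq> M'"
    have "M' \<subseteq> M"
    proof
      fix f assume f: "f \<in> M'"
      hence "f \<in> E" using M' unfolding matching_def by blast
      then obtain g x where g: "g \<in> M" "x \<in> f" "x \<in> g" using H by blast
      hence "g \<in> M'" using M' by blast
      hence "f = g" using M' f g unfolding matching_def by blast
      thus "f \<in> M" using g by simp
    qed
    thus "M' = M" using M' by blast
  qed
qed

lemma maximal_iff: assumes ab: "{a,b} \<in> E" and ne: "\<forall>e\<in>E. e \<noteq> {}"
  shows "maximal_matching E M \<longleftrightarrow> good E a b M \<and> fin (sig E a b M)"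
proof -
  have "(\<forall>e\<in>E. e \<inter> \<Union>M \<noteq> {}) \<longleftrightarrow> (\<forall>e\<in>E. e \<inter> \<Union>M = {} \<longrightarrow> a \<in> e \<or> b \<in> e) \<and> fin (sig E a b M)"
  proof
    assume H: "\<forall>e\<in>E. e \<inter> \<Union>M \<noteq> {}"
    have "{a,b} \<inter> \<Union>M \<noteq> {}" using H ab by blast
    hence "a \<in> \<Union>M \<or> b \<in> \<Union>M" by blast
    thus "(\<forall>e\<in>E. e \<inter> \<Union>M = {} \<longrightarrow> a \<in> e \<or> b \<in> e) \<and> fin (sig E a b M)"
      using H unfolding sig_def by auto
  next
    assume H: "(\<forall>e\<in>E. e \<inter> \<Union>M = {} \<longrightarrow> a \<in> e \<or> b \<in> e) \<and> fin (sig E a b M)"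
    hence c: "a \<in> \<Union>M \<or> b \<in> \<Union>M" and nda: "\<not>(\<exists>e\<in>E. e \<inter> \<Union>M = {} \<and> a \<in> e \<and> b \<notin> e)"
      and ndb: "\<not>(\<exists>e\<in>E. e \<inter> \<Union>M = {} \<and> b \<in> e \<and> a \<notin> e)" unfolding sig_def by auto
    show "\<forall>e\<in>E. e \<inter> \<Union>M \<noteq> {}"
    proof (intro ballI notI)
      fix e assume e: "e \<in> E" and d: "e \<inter> \<Union>M = {}"
      have "a \<in> e \<or> b \<in> e" using H e d by blast
      moreover have "\<not>(a \<in> e \<and> b \<in> e)" using c d by blast
      ultimately show False using nda ndb e d by blast
    qed
  qed
  thus ?thesis unfolding maximal_iff1[OF ne] good_def by blast
qed

lemma good_sub_gen: "good F x y M \<Longrightarrow> M \<subseteq> F" unfolding good_def matching_def by blast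

lemma finM_gen: "finite E \<Longrightarrow> finite {M. good E a b M \<and> R M}"
  by (rule finite_subset[of _ "Pow E"]) (auto dest: good_sub_gen)

lemma card_sig_gen: assumes "finite E"
  shows "card {M. good E a b M \<and> R (sig E a b M)} = (\<Sum>s\<in>UNIV. if R s then cnt E a b s else 0)"
proof -
  have "{M. good E a b M \<and> R (sig E a b M)} = (\<Union>s\<in>{s. R s}. {M. good E a b M \<and> sig E a b M = s})" by auto
  hence "card {M. good E a b M \<and> R (sig E a b M)} = (\<Sum>s\<in>{s. R s}. cnt E a b s)"
    unfolding cnt_def by (simp only:) (rule card_UN_disjoint; auto intro: finM_gen[OF assms])
  also have "\<dots> = (\<Sum>s\<in>UNIV. if R s then cnt E a b s else 0)"
    using sum.inter_filter[of UNIV "cnt E a b" R] by simp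
  finally show ?thesis .
qed

lemma chain_GG: assumes v: "valid c" and n: "n \<ge> 1" shows "chain_edges c n = GG c n"
proof -
  obtain m where m: "n = Suc m" using n by (cases n) auto
  have "{AA c n, BB c n} \<in> chain_edges c n"
    unfolding m chain_Suc hex_PP using att_in_PP[OF v, of m] by blast
  thus ?thesis unfolding GG_def by blast
qed

lemma chain_ne: "\<forall>e\<in>chain_edges c n. e \<noteq> {}"
  unfolding chain_edges_def hex_PP PP_def by auto

lemma sum_fin: "(\<Sum>s\<in>UNIV. if fin s then f s else 0) = f (True,True,False,False) + f (True,False,False,False) + f (False,True,False,False)"
  by (simp add: sum_UNIV_prod sum_UNIV_bool add_ac)

lemma Psi_chain: assumes v: "valid c" and n: "n \<ge> 1"
  shows "Psi (chain_edges c n) = vec c n (True,True,False,False) + vec c n (True,False,False,False) + vec c n (False,True,False,False)"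
proof -
  have ab: "{AA c n, BB c n} \<in> GG c n" by (simp add: GG_def)
  have ne: "\<forall>e\<in>GG c n. e \<noteq> {}" using chain_ne[of c n] chain_GG[OF v n] by simp
  have "Psi (chain_edges c n) = card {M. maximal_matching (GG c n) M}" unfolding Psi_def chain_GG[OF v n] ..
  also have "\<dots> = card {M. good (GG c n) (AA c n) (BB c n) M \<and> fin (sig (GG c n) (AA c n) (BB c n) M)}"
    using maximal_iff[OF ab ne] by simp
  also have "\<dots> = (\<Sum>s\<in>UNIV. if fin s then cnt (GG c n) (AA c n) (BB c n) s else 0)"
    by (rule card_sig_gen) (simp add: GG_def fin_chain)
  also have "\<dots> = vec c n (True,True,False,False) + vec c n (True,False,False,False) + vec c n (False,True,False,False)"
    unfolding cnt_GG[OF v] sum_fin ..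
  finally show ?thesis .
qed

definition cZ :: "nat \<Rightarrow> nat" where "cZ i = (if even i then 1 else 3)"

lemma mirror: "vstep 3 (\<lambda>s. f (swp s)) s' = vstep 1 f (swp s')"
proof (rule all_st[of _ s'])
  fix a b c d
  show "vstep 3 (\<lambda>s. f (swp s)) (a,b,c,d) = vstep 1 f (swp (a,b,c,d))"
    by (rule bool_cases4[of _ a b c d]) (simp_all add: step1' step3)
qed

lemma swp_swp: "swp (swp s) = s" by (cases s) simp

lemma vecZ: "vec cZ n = (if even n then VZ n else (\<lambda>s. VZ n (swp s)))"
proof (induction n)
  case 0 show ?case by simp
next
  case (Suc n)
  show ?case
  proof (cases "even n")
    case True
    have cz: "cZ n = 1" by (simp add: cZ_def True)
    have IH: "vec cZ n = VZ n" using Suc.IH True by simp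
    have "vec cZ (Suc n) = vstep 1 (VZ n)" by (simp only: vec.simps(2) cz IH)
    thus ?thesis using True by (simp add: swp_swp)
  next
    case False
    have cz: "cZ n = 3" by (simp add: cZ_def False)
    have IH: "vec cZ n = (\<lambda>s. VZ n (swp s))" using Suc.IH False by simp
    have "vec cZ (Suc n) = vstep 3 (\<lambda>s. VZ n (swp s))" by (simp only: vec.simps(2) cz IH)
    thus ?thesis using False by (simp add: mirror[unfolded One_nat_def])
  qed
qed

lemma valid_consts: "valid (\<lambda>_. 2)" "valid (\<lambda>_. 1)" "valid cZ"
  unfolding valid_def cZ_def by auto

lemma ell_aL: "ell n = aL n"
proof (cases "n = 0")
  case True thus ?thesis by (simp add: ell_def aL_vals)
next
  case False
  have "cL = (\<lambda>_. 2)" by (rule ext) (simp add: cL_def)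
  thus ?thesis using False Psi_chain[OF valid_consts(1), of n] unfolding ell_def aL_def polyacene_def by simp
qed

lemma hh_aH: "hh n = aH n"
proof (cases "n = 0")
  case True thus ?thesis by (simp add: hh_def aH_vals)
next
  case False
  have "cH = (\<lambda>_. 1)" by (rule ext) (simp add: cH_def)
  thus ?thesis using False Psi_chain[OF valid_consts(2), of n] unfolding hh_def aH_def helicene_def by simp
qed

lemma zz_aZ: "zz n = aZ n"
proof (cases "n = 0")
  case True thus ?thesis by (simp add: zz_def aZ_vals)
next
  case False
  have "cZ = (\<lambda>i. if even i then 1 else 3)" by (rule ext) (simp add: cZ_def)
  hence "zz n = vec cZ n (True,True,False,False) + vec cZ n (True,False,False,False) + vec cZ n (False,True,False,False)"
    using False Psi_chain[OF valid_consts(3), of n] unfolding zz_def zigzag_def by simp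
  thus ?thesis unfolding vecZ aZ_def by simp
qed

theorem theorem4p4:
  shows "Abs_fps (\<lambda>n. of_nat (ell n) :: rat)
           = fps_of_poly [:1, 1, 0, -1:] / fps_of_poly [:1, -4, 0, 0, -1, -1:] \<and>
         Abs_fps (\<lambda>n. of_nat (zz n) :: rat)
           = fps_of_poly [:1, 2, 4, 4, 6, 4, 1:] / fps_of_poly [:1, -3, -1, -6, -7, -7, -5, -1:] \<and>
         Abs_fps (\<lambda>n. of_nat (hh n) :: rat)
           = fps_of_poly [:1, 4, 8, 8, 7, 4, 2:] / fps_of_poly [:1, -1, -7, -12, -6, -7, -4, -2:]"
  unfolding ell_aL zz_aZ hh_aH using gfL gfZ gfH by blast


end
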